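(* Let $a,b,c,p\in\mathbb{C}$ with $-c\notin\mathbb{N}\cup\{0\}$ and $c\neq2$. Suppose that $\cosh(pz)F(a,b;c;z)=\sum_{n=0}^\infty u_nz^n$ for $|z|<1$. Then $u_0=1$, $u_1=\frac{ab}{c}$, $u_2=\frac{(a)_2(b)_2}{2(c)_2}+\frac{p^2}{2}$, $u_3=\frac{abp^2}{2c}+\frac{(a)_3(b)_3}{6(c)_3}$, $u_4=\frac{(a)_2(b)_2p^2}{4(c)_2}+\frac{(a)_4(b)_4}{24(c)_4}+\frac{p^4}{24}$, $u_5=\frac{abp^4}{24c}+\frac{(a)_3(b)_3p^2}{12(c)_3}+\frac{(a)_5(b)_5}{120(c)_5}$, $u_6=\frac{(a)_2(b)_2p^4}{48(c)_2}+\frac{(a)_4(b)_4p^2}{48(c)_4}+\frac{(a)_6(b)_6}{720(c)_6}+\frac{p^6}{720}$, $u_7=\frac{abp^6}{720c}+\frac{(a)_3(b)_3p^4}{144(c)_3}+\frac{(a)_5(b)_5p^2}{240(c)_5}+\frac{(a)_7(b)_7}{5040(c)_7}$, $u_8=\frac{(a)_2(b)_2p^6}{1440(c)_2}+\frac{(a)_4(b)_4p^4}{576(c)_4}+\frac{(a)_6(b)_6p^2}{1440(c)_6}+\frac{(a)_8(b)_8}{40320(c)_8}+\frac{p^8}{40320}$, $u_9=\frac{abp^8}{40320c}+\frac{(a)_3(b)_3p^6}{4320(c)_3}+\frac{(a)_5(b)_5p^4}{2880(c)_5}+\frac{(a)_7(b)_7p^2}{10080(c)_7}+\frac{(a)_9(b)_9}{362880(c)_9}$,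 and for all integers $n\ge9$, \[ u_{n+1}=\sum_{i=0}^9\delta_i(n)u_{n-i}, \] where $D(n)=(c-2)c\,n(n+1)(c+n-1)(c+n)$ and \[ \delta_0(n)=\frac{2(n-1)^2\left(a(c-2b)+c(b+c-3)\right)+4(c-2)(n-1)\left(c(a+b)-ab\right)+2ab(c-2)(c+1)}{(c-2)c(n+1)(c+n)}, \] \[ \begin{aligned} \delta_1(n)=\frac{1}{D(n)}\Big[&-(n-4)(n-3)(n-2)(n-1)\left(a^2+4c(a+b)-10ab+b^2+c^2-6c-4p^2-1\right)\\ &+2(n-3)(n-2)(n-1)\Big(a^2(4b-3c)+a\left(2(b-1)c+4b(b+3)-3c^2\right)-c\left(b(3b+3c+2)+c-4p^2-13\right)\Big)\\ &+(n-2)(n-1)\Big(a^2\left(8b^2+b(4c+6)-6c^2+c\right)+a\left(-(10b+7)c^2+4(b(b+3)+3)c+6b(b+1)\right)\\ &\qquad+c\left(b^2(1-6c)+b(12-7c)+6(c-2)p^2+c+11\right)\Big)\\ &+(c-2)\left(a^2b(c-b(c+2))+ab(b+1)c+c^2(c+1)p^2\right)\\ &+2(n-1)\left(a^2b(b(4c-2)-3(c-1)c)-abc(3b(c-1)+c-5)+(c-2)c(c+1)p^2\right)\Big], \end{aligned} \] \[ \begin{aligned} \delta_2(n)=\frac{2}{D(n)}\Big[&(n-5)(n-4)(n-3)(n-2)\left(a^2+a(c-4b)+(b-1)(b+c+1)-8p^2\right)\\ &+(n-4)(n-3)(n-2)\Big(a^3+a^2(-5b+3c+2)-a\left(b(5b-2c+14)-3c+4p^2+1\right)+(b+3c+1)\left(b^2+b-4p^2-2\right)\Big)\\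 &-(n-3)(n-2)\Big(a^3(b-2c)+a^2(b(10b+9)-4(b+1)c)+a\left(b(b+1)(b-4c+8)+6cp^2+2c\right)\\ &\qquad+2c\left(-b^3-2b^2+3p^2(b+c-3)+b+2\right)\Big)\\ &-(n-2)\Big(a^3b(4b-3c+2)+a^2b(2b+1)(2b-c)-a\left(p^2(10b-3c^2+c)+(b-1)b(b(3c-2)+4c-2)\right)\\ &\qquad+cp^2\left(b(3c-1)+c^2-9\right)\Big)\\ &-(c+1)p^2\left(c^2(2a+2b+1)-3(a+1)(b+1)c+4ab\right)\\ &-(a-1)a(b-1)b\left(-c(a+b+1)+2ab+a+b+1\right)\Big], \end{aligned} \] \[ \begin{aligned} \delta_3(n)=-\frac{1}{D(n)}\Big[&(n-6)(n-5)(n-4)(n-3)\left((a-b)^2-24p^2-1\right)\\ &+2(n-5)(n-4)(n-3)\Big(a^3-a^2(b-2)-a\left(b(b+4)+12p^2+1\right)+b^3+2b^2-12p^2(b+c+1)-b-2\Big)\\ &+(n-4)(n-3)\Big(a^4+a^3(2b+3)-a^2\left(6b^2+3b+6p^2-1\right)+a\left(-12p^2(b+2c)+b(b(2b-3)-8)-3\right)\\ &\qquad-6p^2\left(b^2+4bc+(c-6)c-1\right)+(b+1)^2\left(b^2+b-2\right)+8p^4\Big)\\ &+2(n-3)\Big(-p^2\left(c^2(3a+3b+1)+c(a+b)(3a+3b+2)-40ab-13c\right)+ab(a-b-1)(a-b+1)(a+b)+4cp^4\Big)\\ &+a^4(b-1)b+a^3b(-2b^2+b+1)+a^2\left(b^4+b^3+p^2\left(-12b^2+2b(6c+5)-6c^2+c\right)-3b^2+b\right)\\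 &+ap^2\left(-(6b+7)c^2+4(b(3b+2)+3)c+2b(5b-11)\right)\\ &-a(b-1)^2b(b+1)+cp^2\left(b^2(1-6c)+b(12-7c)+5(c-2)p^2+c+11\right)\Big], \end{aligned} \] \[ \begin{aligned} \delta_4(n)=\frac{2p^2}{D(n)}\Big[&-8(n-7)(n-6)(n-5)(n-4)-4(n-6)(n-5)(n-4)\left(3(a+b+1)+c\right)\\ &+2(n-5)(n-4)\left(8p^2-3(a+b-1)(a+b+c+1)\right)\\ &+(n-4)\Big(-a^3-a^2(3b+3c+2)+a\left(b(-3b-6c+46)-3c+4p^2+1\right)-(b+3c+1)\left(b^2+b-4p^2-2\right)\Big)\\ &+a^3(3b-2c)+a^2(3(5-2b)b-4c)+a\left(p^2(5c-6b)-4bc+3b(b(b+5)-4)+2c\right)\\ &+5cp^2(b+c-3)-2(b-1)(b+1)(b+2)c\Big], \end{aligned} \] \[ \begin{aligned} \delta_5(n)=\frac{p^2}{D(n)}\Big[&4(n-8)(n-7)(n-6)(n-5)+8(n-7)(n-6)(n-5)(a+b+1)\\ &+6(n-6)(n-5)\left((a+b)^2-8p^2-1\right)\\ &-2(n-5)\left(-a^3-3a^2b-2a^2-3ab^2+12p^2(a+b+c+1)+16ab+a-b^3-2b^2+b+2\right)\\ &+a^4+a^3(3-2b)+a^2\left(b(6b-11)-5p^2+1\right)-a\left(2b^3+11b^2-2b(13p^2+6)+20cp^2+3\right)\\ &-5p^2\left(b^2+4bc+(c-6)c-1\right)+(b+1)^2\left(b^2+b-2\right)+4p^4\Big], \end{aligned}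 \] \[ \delta_6(n)=\frac{2p^4\left(5a^2+a(-8b+5c+12n-72)+5b^2+5bc+12b(n-6)+4n(c+4n)-29c-196n-8p^2+595\right)}{D(n)}, \] \[ \delta_7(n)=\frac{p^4\left(-5a^2+2a(b-4n+28)-5b^2-8b(n-7)-8(n-14)n+24p^2-387\right)}{D(n)}, \] \[ \delta_8(n)=-\frac{16p^6}{D(n)},\qquad \delta_9(n)=\frac{4p^6}{D(n)}. \]
   Context: For $a\in\mathbb{C}$, $(a)_n=a(a+1)\cdots(a+n-1)$ denotes the Pochhammer symbol, with $(a)_0=1$. For $a,b,c\in\mathbb{C}$ with $-c\notin\mathbb{N}\cup\{0\}$, the Gaussian hypergeometric function is $F(a,b;c;z)=\sum_{n=0}^\infty \frac{(a)_n(b)_n}{(c)_n\,n!}z^n$, $|z|<1$. *)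

theory Defs
  imports "HOL-Analysis.Analysis"
begin

text \<open>Gaussian hypergeometric series F(a,b;c;z), as a formal sum (meaningful for |z|<1).\<close>
definition hypergeomF :: "complex \<Rightarrow> complex \<Rightarrow> complex \<Rightarrow> complex \<Rightarrow> complex" where
  "hypergeomF a b c z =
     (\<Sum>n. pochhammer a n * pochhammer b n / (pochhammer c n * fact n) * z ^ n)"

definition Dfun :: "complex \<Rightarrow> complex \<Rightarrow> complex \<Rightarrow> complex \<Rightarrow> complex \<Rightarrow> complex" where
  "Dfun a b c p x = (c-2)*c*x*(x+1)*(c+x-1)*(c+x)"

definition delta0 :: "complex \<Rightarrow> complex \<Rightarrow> complex \<Rightarrow> complex \<Rightarrow> complex \<Rightarrow> complex" where
  "delta0 a b c p x =
    (2*(x-1)^2*(a*(c-2*b)+c*(b+c-3)) + 4*(c-2)*(x-1)*(c*(a+b)-a*b) + 2*a*b*(c-2)*(c+1))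
    / ((c-2)*c*(x+1)*(c+x))"

definition delta1 :: "complex \<Rightarrow> complex \<Rightarrow> complex \<Rightarrow> complex \<Rightarrow> complex \<Rightarrow> complex" where
  "delta1 a b c p x = (1 / Dfun a b c p x) *
    ( -(x-4)*(x-3)*(x-2)*(x-1)*(a^2+4*c*(a+b)-10*a*b+b^2+c^2-6*c-4*p^2-1)
      + 2*(x-3)*(x-2)*(x-1)*( a^2*(4*b-3*c) + a*(2*(b-1)*c+4*b*(b+3)-3*c^2)
                              - c*(b*(3*b+3*c+2)+c-4*p^2-13) )
      + (x-2)*(x-1)*( a^2*(8*b^2+b*(4*c+6)-6*c^2+c)
                      + a*(-(10*b+7)*c^2+4*(b*(b+3)+3)*c+6*b*(b+1))
                      + c*(b^2*(1-6*c)+b*(12-7*c)+6*(c-2)*p^2+c+11) )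
      + (c-2)*(a^2*b*(c-b*(c+2)) + a*b*(b+1)*c + c^2*(c+1)*p^2)
      + 2*(x-1)*(a^2*b*(b*(4*c-2)-3*(c-1)*c) - a*b*c*(3*b*(c-1)+c-5) + (c-2)*c*(c+1)*p^2) )"

definition delta2 :: "complex \<Rightarrow> complex \<Rightarrow> complex \<Rightarrow> complex \<Rightarrow> complex \<Rightarrow> complex" where
  "delta2 a b c p x = (2 / Dfun a b c p x) *
    ( (x-5)*(x-4)*(x-3)*(x-2)*(a^2+a*(c-4*b)+(b-1)*(b+c+1)-8*p^2)
      + (x-4)*(x-3)*(x-2)*( a^3 + a^2*(-5*b+3*c+2) - a*(b*(5*b-2*c+14)-3*c+4*p^2+1)
                            + (b+3*c+1)*(b^2+b-4*p^2-2) )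
      - (x-3)*(x-2)*( a^3*(b-2*c) + a^2*(b*(10*b+9)-4*(b+1)*c)
                      + a*(b*(b+1)*(b-4*c+8)+6*c*p^2+2*c)
                      + 2*c*(-(b^3)-2*b^2+3*p^2*(b+c-3)+b+2) )
      - (x-2)*( a^3*b*(4*b-3*c+2) + a^2*b*(2*b+1)*(2*b-c)
                - a*(p^2*(10*b-3*c^2+c)+(b-1)*b*(b*(3*c-2)+4*c-2))
                + c*p^2*(b*(3*c-1)+c^2-9) )
      - (c+1)*p^2*(c^2*(2*a+2*b+1)-3*(a+1)*(b+1)*c+4*a*b)
      - (a-1)*a*(b-1)*b*(-c*(a+b+1)+2*a*b+a+b+1) )"

definition delta3 :: "complex \<Rightarrow> complex \<Rightarrow> complex \<Rightarrow> complex \<Rightarrow> complex \<Rightarrow> complex" where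
  "delta3 a b c p x = -(1 / Dfun a b c p x) *
    ( (x-6)*(x-5)*(x-4)*(x-3)*((a-b)^2-24*p^2-1)
      + 2*(x-5)*(x-4)*(x-3)*( a^3 - a^2*(b-2) - a*(b*(b+4)+12*p^2+1) + b^3 + 2*b^2
                              - 12*p^2*(b+c+1) - b - 2 )
      + (x-4)*(x-3)*( a^4 + a^3*(2*b+3) - a^2*(6*b^2+3*b+6*p^2-1)
                      + a*(-12*p^2*(b+2*c) + b*(b*(2*b-3)-8) - 3)
                      - 6*p^2*(b^2+4*b*c+(c-6)*c-1) + (b+1)^2*(b^2+b-2) + 8*p^4 )
      + 2*(x-3)*( -(p^2)*(c^2*(3*a+3*b+1)+c*(a+b)*(3*a+3*b+2)-40*a*b-13*c)
                  + a*b*(a-b-1)*(a-b+1)*(a+b) + 4*c*p^4 )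
      + a^4*(b-1)*b + a^3*b*(-2*b^2+b+1)
      + a^2*(b^4+b^3+p^2*(-12*b^2+2*b*(6*c+5)-6*c^2+c)-3*b^2+b)
      + a*p^2*(-(6*b+7)*c^2+4*(b*(3*b+2)+3)*c+2*b*(5*b-11))
      - a*(b-1)^2*b*(b+1) + c*p^2*(b^2*(1-6*c)+b*(12-7*c)+5*(c-2)*p^2+c+11) )"

definition delta4 :: "complex \<Rightarrow> complex \<Rightarrow> complex \<Rightarrow> complex \<Rightarrow> complex \<Rightarrow> complex" where
  "delta4 a b c p x = (2*p^2 / Dfun a b c p x) *
    ( -8*(x-7)*(x-6)*(x-5)*(x-4) - 4*(x-6)*(x-5)*(x-4)*(3*(a+b+1)+c)
      + 2*(x-5)*(x-4)*(8*p^2-3*(a+b-1)*(a+b+c+1))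
      + (x-4)*( -(a^3) - a^2*(3*b+3*c+2) + a*(b*(-3*b-6*c+46)-3*c+4*p^2+1)
                - (b+3*c+1)*(b^2+b-4*p^2-2) )
      + a^3*(3*b-2*c) + a^2*(3*(5-2*b)*b-4*c) + a*(p^2*(5*c-6*b)-4*b*c+3*b*(b*(b+5)-4)+2*c)
      + 5*c*p^2*(b+c-3) - 2*(b-1)*(b+1)*(b+2)*c )"

definition delta5 :: "complex \<Rightarrow> complex \<Rightarrow> complex \<Rightarrow> complex \<Rightarrow> complex \<Rightarrow> complex" where
  "delta5 a b c p x = (p^2 / Dfun a b c p x) *
    ( 4*(x-8)*(x-7)*(x-6)*(x-5) + 8*(x-7)*(x-6)*(x-5)*(a+b+1)
      + 6*(x-6)*(x-5)*((a+b)^2-8*p^2-1)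
      - 2*(x-5)*( -(a^3)-3*a^2*b-2*a^2-3*a*b^2+12*p^2*(a+b+c+1)+16*a*b+a-(b^3)-2*b^2+b+2 )
      + a^4 + a^3*(3-2*b) + a^2*(b*(6*b-11)-5*p^2+1)
      - a*(2*b^3+11*b^2-2*b*(13*p^2+6)+20*c*p^2+3)
      - 5*p^2*(b^2+4*b*c+(c-6)*c-1) + (b+1)^2*(b^2+b-2) + 4*p^4 )"

definition delta6 :: "complex \<Rightarrow> complex \<Rightarrow> complex \<Rightarrow> complex \<Rightarrow> complex \<Rightarrow> complex" where
  "delta6 a b c p x =
    2*p^4*(5*a^2+a*(-8*b+5*c+12*x-72)+5*b^2+5*b*c+12*b*(x-6)+4*x*(c+4*x)-29*c-196*x-8*p^2+595)
    / Dfun a b c p x"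

definition delta7 :: "complex \<Rightarrow> complex \<Rightarrow> complex \<Rightarrow> complex \<Rightarrow> complex \<Rightarrow> complex" where
  "delta7 a b c p x =
    p^4*(-5*a^2+2*a*(b-4*x+28)-5*b^2-8*b*(x-7)-8*(x-14)*x+24*p^2-387) / Dfun a b c p x"

definition delta8 :: "complex \<Rightarrow> complex \<Rightarrow> complex \<Rightarrow> complex \<Rightarrow> complex \<Rightarrow> complex" where
  "delta8 a b c p x = -(16*p^6 / Dfun a b c p x)"

definition delta9 :: "complex \<Rightarrow> complex \<Rightarrow> complex \<Rightarrow> complex \<Rightarrow> complex \<Rightarrow> complex" where
  "delta9 a b c p x = 4*p^6 / Dfun a b c p x"

definition delta :: "nat \<Rightarrow> complex \<Rightarrow> complex \<Rightarrow> complex \<Rightarrow> complex \<Rightarrow> complex \<Rightarrow> complex" where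
  "delta i a b c p x =
    [delta0 a b c p x, delta1 a b c p x, delta2 a b c p x, delta3 a b c p x, delta4 a b c p x,
     delta5 a b c p x, delta6 a b c p x, delta7 a b c p x, delta8 a b c p x, delta9 a b c p x] ! i"

end

theory Submission
  imports Defs "HOL-Computational_Algebra.Formal_Power_Series" "HOL-Analysis.FPS_Convergence"
begin



definition fc :: "complex \<Rightarrow> complex \<Rightarrow> complex \<Rightarrow> nat \<Rightarrow> complex" where
  "fc a b c n = pochhammer a n * pochhammer b n / (pochhammer c n * fact n)"

definition hs :: "complex \<Rightarrow> complex \<Rightarrow> complex \<Rightarrow> complex \<Rightarrow> nat \<Rightarrow> complex" where
  "hs a b c q n = (\<Sum>k\<le>n. q^k / fact k * fc a b c (n-k))"

lemma poch_nz: assumes "\<forall>k::nat. c \<noteq> - of_nat k" shows "pochhammer (c::complex) n \<noteq> 0"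
  using assms by (auto simp: pochhammer_eq_0_iff)

lemma fc_rec:
  assumes hc: "\<forall>k::nat. c \<noteq> - of_nat k"
  shows "(of_nat n + 1) * (of_nat n + c) * fc a b c (Suc n) = (of_nat n + a) * (of_nat n + b) * fc a b c n"
proof -
  have h1: "c + of_nat n \<noteq> 0" using hc by (metis add.commute add_eq_0_iff2)
  have h2: "pochhammer c n \<noteq> 0" using poch_nz[OF hc] .
  have h3: "(fact n :: complex) \<noteq> 0" by simp
  have h4: "(of_nat n + 1 :: complex) \<noteq> 0" by (metis of_nat_Suc of_nat_eq_0_iff add.commute nat.distinct(1))
  have "fc a b c (Suc n) = (pochhammer a n * (a + of_nat n)) * (pochhammer b n * (b + of_nat n))
        / ((pochhammer c n * (c + of_nat n)) * ((of_nat n + 1) * fact n))"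
    by (simp add: fc_def pochhammer_Suc fact_Suc add.commute)
  also have "\<dots> = fc a b c n * ((a + of_nat n) * (b + of_nat n)) / ((c + of_nat n) * (of_nat n + 1))"
    unfolding fc_def using h1 h2 h3 h4 by (simp add: field_simps)
  finally have e: "fc a b c (Suc n) = fc a b c n * ((a + of_nat n) * (b + of_nat n)) / ((c + of_nat n) * (of_nat n + 1))" .
  have nz: "(c + of_nat n) * (of_nat n + 1) \<noteq> 0" using h1 h4 by simp
  have "(of_nat n + 1) * (of_nat n + c) * fc a b c (Suc n) = ((c + of_nat n) * (of_nat n + 1)) * (fc a b c n * ((a + of_nat n) * (b + of_nat n)) / ((c + of_nat n) * (of_nat n + 1)))"
    unfolding e by (simp add: ac_simps)
  also have "\<dots> = fc a b c n * ((a + of_nat n) * (b + of_nat n))" using nz by simp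
  finally show ?thesis by (simp add: ac_simps)
qed

lemma F_ode:
  fixes a b c :: complex
  assumes hc: "\<forall>k::nat. c \<noteq> - of_nat k"
  defines "F \<equiv> Abs_fps (fc a b c)"
  shows "fps_X * fps_deriv (fps_deriv F) - fps_X * (fps_X * fps_deriv (fps_deriv F))
     + fps_const c * fps_deriv F - fps_const (a+b+1) * (fps_X * fps_deriv F) - fps_const (a*b) * F = 0"
proof (rule fps_ext)
  fix n
  have r: "(of_nat n + 1) * (of_nat n + c) * fc a b c (Suc n) = (of_nat n + a) * (of_nat n + b) * fc a b c n"
    by (rule fc_rec[OF hc])
  show "fps_nth (fps_X * fps_deriv (fps_deriv F) - fps_X * (fps_X * fps_deriv (fps_deriv F))
     + fps_const c * fps_deriv F - fps_const (a+b+1) * (fps_X * fps_deriv F) - fps_const (a*b) * F) n = fps_nth 0 n"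
  proof (cases n)
    case 0
    then show ?thesis using r by (simp add: F_def algebra_simps)
  next
    case (Suc k)
    then show ?thesis using r
      by (cases k) (simp_all add: F_def algebra_simps)
  qed
qed

lemma ring_aux1:
  fixes e x f2 f1 f cc k ab :: "'a::comm_ring_1"
  shows "e * (x*f2 - x*(x*f2) + cc*f1 - k*(x*f1) - ab*f) = x*(e*f2) - x*(x*(e*f2)) + cc*(e*f1) - k*(x*(e*f1)) - ab*(e*f)"
  by (simp add: algebra_simps)

lemma ring_aux2:
  fixes ef2 ef1 y1 y Q :: "'a::comm_ring_1"
  assumes "ef1 = y1 - Q*y"
  shows "(ef2 + Q*ef1 + Q*y1) - (Q+Q)*y1 + (Q*Q)*y = ef2"
  unfolding assms by (simp add: algebra_simps)

lemma Y_ode: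
  fixes a b c q :: complex
  assumes hc: "\<forall>k::nat. c \<noteq> - of_nat k"
  defines "F \<equiv> Abs_fps (fc a b c)"
  defines "Y \<equiv> fps_exp q * F"
  defines "D1 \<equiv> fps_deriv Y - fps_const q * Y"
  defines "D2 \<equiv> fps_deriv (fps_deriv Y) - fps_const (2*q) * fps_deriv Y + fps_const (q^2) * Y"
  shows "fps_X * D2 - fps_X * (fps_X * D2)
     + fps_const c * D1 - fps_const (a+b+1) * (fps_X * D1) - fps_const (a*b) * Y = 0"
proof -
  let ?E = "fps_exp q"
  have d1: "fps_deriv Y = ?E * fps_deriv F + fps_const q * Y"
    unfolding Y_def by (simp add: mult.assoc)
  have e1: "?E * fps_deriv F = D1"
    unfolding D1_def d1 by simp
  have d2: "fps_deriv (fps_deriv Y) = ?E * fps_deriv (fps_deriv F) + fps_const q * (?E * fps_deriv F) + fps_const q * fps_deriv Y"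
  proof -
    have s1: "fps_deriv (fps_deriv Y) = fps_deriv (?E * fps_deriv F) + fps_deriv (fps_const q * Y)"
      by (simp only: d1 fps_deriv_add)
    have s2: "fps_deriv (?E * fps_deriv F) = ?E * fps_deriv (fps_deriv F) + fps_const q * (?E * fps_deriv F)"
      by (simp add: mult.assoc)
    have s3: "fps_deriv (fps_const q * Y) = fps_const q * fps_deriv Y" by simp
    show ?thesis unfolding s1 s2 s3 ..
  qed
  have e2: "?E * fps_deriv (fps_deriv F) = D2"
  proof -
    have "D2 = (?E * fps_deriv (fps_deriv F) + fps_const q * (?E * fps_deriv F) + fps_const q * fps_deriv Y)
       - (fps_const q + fps_const q) * fps_deriv Y + (fps_const q * fps_const q) * Y"
      unfolding D2_def d2[symmetric] by (simp only: mult_2 power2_eq_square fps_const_add fps_const_mult)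
    also have "\<dots> = ?E * fps_deriv (fps_deriv F)"
      by (rule ring_aux2) (simp only: e1 D1_def)
    finally show ?thesis by simp
  qed
  have "?E * (fps_X * fps_deriv (fps_deriv F) - fps_X * (fps_X * fps_deriv (fps_deriv F))
     + fps_const c * fps_deriv F - fps_const (a+b+1) * (fps_X * fps_deriv F) - fps_const (a*b) * F) = 0"
    using F_ode[OF hc] by (simp add: F_def)
  then show ?thesis
    unfolding ring_aux1 e1 e2 Y_def .
qed


lemma Y_nth: "fps_nth (fps_exp q * Abs_fps (fc a b c)) n = hs a b c q n"
  by (simp add: fps_mult_nth hs_def atLeast0AtMost)

lemma coef_extract:
  fixes Y :: "complex fps" and a b c q :: complex
  assumes "fps_X * (fps_deriv (fps_deriv Y) - fps_const (2*q) * fps_deriv Y + fps_const (q^2) * Y)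
     - fps_X * (fps_X * (fps_deriv (fps_deriv Y) - fps_const (2*q) * fps_deriv Y + fps_const (q^2) * Y))
     + fps_const c * (fps_deriv Y - fps_const q * Y) - fps_const (a+b+1) * (fps_X * (fps_deriv Y - fps_const q * Y))
     - fps_const (a*b) * Y = 0"
  shows "(of_nat (k+2)) * (of_nat (k+3)) * fps_nth Y (k+3) - 2*q* of_nat (k+2) * fps_nth Y (k+2) + q^2 * fps_nth Y (k+1)
     - (of_nat (k+1) * of_nat (k+2) * fps_nth Y (k+2) - 2*q* of_nat (k+1) * fps_nth Y (k+1) + q^2 * fps_nth Y k)
     + c * (of_nat (k+3) * fps_nth Y (k+3) - q * fps_nth Y (k+2))
     - (a+b+1) * (of_nat (k+2) * fps_nth Y (k+2) - q * fps_nth Y (k+1))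
     - a*b * fps_nth Y (k+2) = 0"
proof -
  have "fps_nth (fps_X * (fps_deriv (fps_deriv Y) - fps_const (2*q) * fps_deriv Y + fps_const (q^2) * Y)
     - fps_X * (fps_X * (fps_deriv (fps_deriv Y) - fps_const (2*q) * fps_deriv Y + fps_const (q^2) * Y))
     + fps_const c * (fps_deriv Y - fps_const q * Y) - fps_const (a+b+1) * (fps_X * (fps_deriv Y - fps_const q * Y))
     - fps_const (a*b) * Y) (k+2) = 0"
    using assms by simp
  then show ?thesis by (simp add: numeral_eq_Suc algebra_simps)
qed

lemma hs_rec:
  fixes a b c q :: complex
  assumes hc: "\<forall>k::nat. c \<noteq> - of_nat k"
  shows "(of_nat k + 3) * (of_nat k + 2 + c) * hs a b c q (k+3) =
     ((of_nat k + 2 + a)*(of_nat k + 2 + b) + q*(2*(of_nat k+2)+c)) * hs a b c q (k+2)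
     - q*(2*(of_nat k + 2) - 1 + q + a + b) * hs a b c q (k+1) + q^2 * hs a b c q k"
proof -
  have eq: "(of_nat (k+2)) * (of_nat (k+3)) * hs a b c q (k+3) - 2*q* of_nat (k+2) * hs a b c q (k+2) + q^2 * hs a b c q (k+1)
     - (of_nat (k+1) * of_nat (k+2) * hs a b c q (k+2) - 2*q* of_nat (k+1) * hs a b c q (k+1) + q^2 * hs a b c q k)
     + c * (of_nat (k+3) * hs a b c q (k+3) - q * hs a b c q (k+2))
     - (a+b+1) * (of_nat (k+2) * hs a b c q (k+2) - q * hs a b c q (k+1))
     - a*b * hs a b c q (k+2) = 0"
    using coef_extract[OF Y_ode[OF hc, where a=a and b=b and q=q], where k=k] by (simp only: Y_nth)
  show ?thesis using eq by (simp add: algebra_simps) algebra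
qed




lemma ident: fixes a b c p x wa wb wc wd we wf wg wh wi wj wk :: complex shows
"(c-2)*c*x*(x+1)*(c+x-1)*(c+x)*wa - (((2*(x-1)^2*(a*(c-2*b)+c*(b+c-3)) + 4*(c-2)*(x-1)*(c*(a+b)-a*b) + 2*a*b*(c-2)*(c+1)) * x * (c+x-1))*wb + (( -(x-4)*(x-3)*(x-2)*(x-1)*(a^2+4*c*(a+b)-10*a*b+b^2+c^2-6*c-4*p^2-1) + 2*(x-3)*(x-2)*(x-1)*( a^2*(4*b-3*c) + a*(2*(b-1)*c+4*b*(b+3)-3*c^2) - c*(b*(3*b+3*c+2)+c-4*p^2-13) ) + (x-2)*(x-1)*( a^2*(8*b^2+b*(4*c+6)-6*c^2+c) + a*(-(10*b+7)*c^2+4*(b*(b+3)+3)*c+6*b*(b+1)) + c*(b^2*(1-6*c)+b*(12-7*c)+6*(c-2)*p^2+c+11) ) + (c-2)*(a^2*b*(c-b*(c+2)) + a*b*(b+1)*c + c^2*(c+1)*p^2) + 2*(x-1)*(a^2*b*(b*(4*c-2)-3*(c-1)*c) - a*b*c*(3*b*(c-1)+c-5) + (c-2)*c*(c+1)*p^2) ))*wc + (2 * ( (x-5)*(x-4)*(x-3)*(x-2)*(a^2+a*(c-4*b)+(b-1)*(b+c+1)-8*p^2) + (x-4)*(x-3)*(x-2)*( a^3 + a^2*(-5*b+3*c+2) - a*(b*(5*b-2*c+14)-3*c+4*p^2+1) + (b+3*c+1)*(b^2+b-4*p^2-2) ) - (x-3)*(x-2)*( a^3*(b-2*c) + a^2*(b*(10*b+9)-4*(b+1)*c)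 + a*(b*(b+1)*(b-4*c+8)+6*c*p^2+2*c) + 2*c*(-(b^3)-2*b^2+3*p^2*(b+c-3)+b+2) ) - (x-2)*( a^3*b*(4*b-3*c+2) + a^2*b*(2*b+1)*(2*b-c) - a*(p^2*(10*b-3*c^2+c)+(b-1)*b*(b*(3*c-2)+4*c-2)) + c*p^2*(b*(3*c-1)+c^2-9) ) - (c+1)*p^2*(c^2*(2*a+2*b+1)-3*(a+1)*(b+1)*c+4*a*b) - (a-1)*a*(b-1)*b*(-c*(a+b+1)+2*a*b+a+b+1) ))*wd + (- ( (x-6)*(x-5)*(x-4)*(x-3)*((a-b)^2-24*p^2-1) + 2*(x-5)*(x-4)*(x-3)*( a^3 - a^2*(b-2) - a*(b*(b+4)+12*p^2+1) + b^3 + 2*b^2 - 12*p^2*(b+c+1) - b - 2 ) + (x-4)*(x-3)*( a^4 + a^3*(2*b+3) - a^2*(6*b^2+3*b+6*p^2-1) + a*(-12*p^2*(b+2*c) + b*(b*(2*b-3)-8) - 3) - 6*p^2*(b^2+4*b*c+(c-6)*c-1) + (b+1)^2*(b^2+b-2) + 8*p^4 ) + 2*(x-3)*( -(p^2)*(c^2*(3*a+3*b+1)+c*(a+b)*(3*a+3*b+2)-40*a*b-13*c) + a*b*(a-b-1)*(a-b+1)*(a+b) + 4*c*p^4 ) + a^4*(b-1)*b + a^3*b*(-2*b^2+b+1) + a^2*(b^4+b^3+p^2*(-12*b^2+2*b*(6*c+5)-6*c^2+c)-3*b^2+b) + a*p^2*(-(6*b+7)*c^2+4*(b*(3*b+2)+3)*c+2*b*(5*b-11))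 - a*(b-1)^2*b*(b+1) + c*p^2*(b^2*(1-6*c)+b*(12-7*c)+5*(c-2)*p^2+c+11) ))*we + (2*p^2 * ( -8*(x-7)*(x-6)*(x-5)*(x-4) - 4*(x-6)*(x-5)*(x-4)*(3*(a+b+1)+c) + 2*(x-5)*(x-4)*(8*p^2-3*(a+b-1)*(a+b+c+1)) + (x-4)*( -(a^3) - a^2*(3*b+3*c+2) + a*(b*(-3*b-6*c+46)-3*c+4*p^2+1) - (b+3*c+1)*(b^2+b-4*p^2-2) ) + a^3*(3*b-2*c) + a^2*(3*(5-2*b)*b-4*c) + a*(p^2*(5*c-6*b)-4*b*c+3*b*(b*(b+5)-4)+2*c) + 5*c*p^2*(b+c-3) - 2*(b-1)*(b+1)*(b+2)*c ))*wf + (p^2 * ( 4*(x-8)*(x-7)*(x-6)*(x-5) + 8*(x-7)*(x-6)*(x-5)*(a+b+1) + 6*(x-6)*(x-5)*((a+b)^2-8*p^2-1) - 2*(x-5)*( -(a^3)-3*a^2*b-2*a^2-3*a*b^2+12*p^2*(a+b+c+1)+16*a*b+a-(b^3)-2*b^2+b+2 ) + a^4 + a^3*(3-2*b) + a^2*(b*(6*b-11)-5*p^2+1) - a*(2*b^3+11*b^2-2*b*(13*p^2+6)+20*c*p^2+3) - 5*p^2*(b^2+4*b*c+(c-6)*c-1) + (b+1)^2*(b^2+b-2) + 4*p^4 ))*wg + (2*p^4*(5*a^2+a*(-8*b+5*c+12*x-72)+5*b^2+5*b*c+12*b*(x-6)+4*x*(c+4*x)-29*c-196*x-8*p^2+595))*wh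 + (p^4*(-5*a^2+2*a*(b-4*x+28)-5*b^2-8*b*(x-7)-8*(x-14)*x+24*p^2-387))*wi + (-(16*p^6 ))*wj + (4*p^6)*wk) =
 -((- (c^3*x) - c^2*x^2 + 3*c^2*x + 2*c*x^2 - 2*c*x)*(((x-0)+1)*((x-0)+c)*wa - (((x-0)+a)*((x-0)+b) + p*(2*(x-0)+c))*wb + p*(2*(x-0)-1+p+a+b)*wc - p^2*wd) + (a*b*c^2 - 4*a*b*c*x + 4*a*b*c - 4*a*b*x^2 + 16*a*b*x - 16*a*b + 3*a*c^2*x - 4*a*c^2 + 2*a*c*x^2 - 10*a*c*x + 10*a*c + 3*b*c^2*x - 4*b*c^2 + 2*b*c*x^2 - 10*b*c*x + 10*b*c - c^3*p - 2*c^2*p*x + 2*c^2*p + c^2*x^2 - 4*c^2*x + 2*c^2 + 4*c*p*x - 4*c*x^2 + 12*c*x - 6*c)*(((x-1)+1)*((x-1)+c)*wb - (((x-1)+a)*((x-1)+b) + p*(2*(x-1)+c))*wc + p*(2*(x-1)-1+p+a+b)*wd - p^2*we) + (4*a^2*b^2 - 2*a^2*b*c + 4*a^2*b*x - 10*a^2*b - 3*a^2*c*x + 8*a^2*c - a^2*x^2 + 7*a^2*x - 12*a^2 - 2*a*b^2*c + 4*a*b^2*x - 10*a*b^2 - 4*a*b*c*p - 2*a*b*c*x + 6*a*b*c - 8*a*b*p*x + 16*a*b*p + 6*a*b*x^2 - 34*a*b*x + 46*a*b + 3*a*c^2*p + 4*a*c*p*x - 10*a*c*p - 2*a*c*x^2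 + 12*a*c*x - 16*a*c - 3*b^2*c*x + 8*b^2*c - b^2*x^2 + 7*b^2*x - 12*b^2 + 3*b*c^2*p + 4*b*c*p*x - 10*b*c*p - 2*b*c*x^2 + 12*b*c*x - 16*b*c - c^2*p^2 + 2*c^2*p*x - c^2*p + 4*c*p^2*x - 10*c*p^2 - 8*c*p*x + 6*c*p + 2*c*x^2 - 9*c*x + 8*c + 4*p^2*x^2 - 28*p^2*x + 48*p^2 + x^2 - 7*x + 12)*(((x-2)+1)*((x-2)+c)*wc - (((x-2)+a)*((x-2)+b) + p*(2*(x-2)+c))*wd + p*(2*(x-2)-1+p+a+b)*we - p^2*wf) + (a^3*b + a^3*x - 4*a^3 - 2*a^2*b^2 + 4*a^2*b*p - a^2*b*x + 4*a^2*b - 3*a^2*c*p - 2*a^2*p*x + 8*a^2*p + a^2*x^2 - 8*a^2*x + 16*a^2 + a*b^3 + 4*a*b^2*p - a*b^2*x + 4*a*b^2 - 2*a*b*c*p - 8*a*b*p^2 + 12*a*b*p*x - 28*a*b*p - 2*a*b*x^2 + 16*a*b*x - 33*a*b + 2*a*c*p^2 - 4*a*c*p*x + 8*a*c*p - 4*a*p^2*x + 16*a*p^2 - a*x + 4*a + b^3*x - 4*b^3 - 3*b^2*c*p - 2*b^2*p*x + 8*b^2*p + b^2*x^2 - 8*b^2*x + 16*b^2 + 2*b*c*p^2 - 4*b*c*p*x + 8*b*c*p - 4*b*p^2*x + 16*b*p^2 - b*x + 4*b + c^2*p^2 + 4*c*p^3 - 8*c*p^2*x + 32*c*p^2 + 4*c*p*x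 - 5*c*p + 8*p^3*x - 32*p^3 - 12*p^2*x^2 + 112*p^2*x - 256*p^2 + 2*p*x - 8*p - x^2 + 8*x - 16)*(((x-3)+1)*((x-3)+c)*wd - (((x-3)+a)*((x-3)+b) + p*(2*(x-3)+c))*we + p*(2*(x-3)-1+p+a+b)*wf - p^2*wg) + (a^3*p - a^2*b*p - a^2*p^2 + 2*a^2*p*x - 7*a^2*p - a*b^2*p + 14*a*b*p^2 - 4*a*b*p*x + 14*a*b*p - 2*a*c*p^2 - 4*a*p^3 + 8*a*p^2*x - 44*a*p^2 - a*p + b^3*p - b^2*p^2 + 2*b^2*p*x - 7*b^2*p - 2*b*c*p^2 - 4*b*p^3 + 8*b*p^2*x - 44*b*p^2 - b*p - 8*c*p^3 + 4*c*p^2*x - 22*c*p^2 + 4*p^4 - 24*p^3*x + 124*p^3 + 12*p^2*x^2 - 140*p^2*x + 405*p^2 - 2*p*x + 7*p)*(((x-4)+1)*((x-4)+c)*we - (((x-4)+a)*((x-4)+b) + p*(2*(x-4)+c))*wf + p*(2*(x-4)-1+p+a+b)*wg - p^2*wh) + (a^2*p^2 - 6*a*b*p^2 + 8*a*p^3 - 4*a*p^2*x + 28*a*p^2 + b^2*p^2 + 8*b*p^3 - 4*b*p^2*x + 28*b*p^2 + 4*c*p^3 - 12*p^4 + 24*p^3*x - 152*p^3 - 4*p^2*x^2 + 56*p^2*x - 197*p^2)*(((x-5)+1)*((x-5)+c)*wf - (((x-5)+a)*((x-5)+b) + p*(2*(x-5)+c))*wg + p*(2*(x-5)-1+p+a+b)*wh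 - p^2*wi) + (- (4*a*p^3) - 4*b*p^3 + 12*p^4 - 8*p^3*x + 60*p^3)*(((x-6)+1)*((x-6)+c)*wg - (((x-6)+a)*((x-6)+b) + p*(2*(x-6)+c))*wh + p*(2*(x-6)-1+p+a+b)*wi - p^2*wj) + (- (4*p^4))*(((x-7)+1)*((x-7)+c)*wh - (((x-7)+a)*((x-7)+b) + p*(2*(x-7)+c))*wi + p*(2*(x-7)-1+p+a+b)*wj - p^2*wk))"
  by algebra

lemma neg_aux: "-(1 / (D::complex)) * K = (- K) / D" by simp

lemma delta1_eq: "delta1 a b c p x = (( -(x-4)*(x-3)*(x-2)*(x-1)*(a^2+4*c*(a+b)-10*a*b+b^2+c^2-6*c-4*p^2-1) + 2*(x-3)*(x-2)*(x-1)*( a^2*(4*b-3*c) + a*(2*(b-1)*c+4*b*(b+3)-3*c^2) - c*(b*(3*b+3*c+2)+c-4*p^2-13) ) + (x-2)*(x-1)*( a^2*(8*b^2+b*(4*c+6)-6*c^2+c) + a*(-(10*b+7)*c^2+4*(b*(b+3)+3)*c+6*b*(b+1)) + c*(b^2*(1-6*c)+b*(12-7*c)+6*(c-2)*p^2+c+11) ) + (c-2)*(a^2*b*(c-b*(c+2)) + a*b*(b+1)*c + c^2*(c+1)*p^2) + 2*(x-1)*(a^2*b*(b*(4*c-2)-3*(c-1)*c) - a*b*c*(3*b*(c-1)+c-5) + (c-2)*c*(c+1)*p^2) )) / Dfun a b c p x"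
  by (simp add: delta1_def)

lemma delta2_eq: "delta2 a b c p x = (2 * ( (x-5)*(x-4)*(x-3)*(x-2)*(a^2+a*(c-4*b)+(b-1)*(b+c+1)-8*p^2) + (x-4)*(x-3)*(x-2)*( a^3 + a^2*(-5*b+3*c+2) - a*(b*(5*b-2*c+14)-3*c+4*p^2+1) + (b+3*c+1)*(b^2+b-4*p^2-2) ) - (x-3)*(x-2)*( a^3*(b-2*c) + a^2*(b*(10*b+9)-4*(b+1)*c) + a*(b*(b+1)*(b-4*c+8)+6*c*p^2+2*c) + 2*c*(-(b^3)-2*b^2+3*p^2*(b+c-3)+b+2) ) - (x-2)*( a^3*b*(4*b-3*c+2) + a^2*b*(2*b+1)*(2*b-c) - a*(p^2*(10*b-3*c^2+c)+(b-1)*b*(b*(3*c-2)+4*c-2)) + c*p^2*(b*(3*c-1)+c^2-9) ) - (c+1)*p^2*(c^2*(2*a+2*b+1)-3*(a+1)*(b+1)*c+4*a*b) - (a-1)*a*(b-1)*b*(-c*(a+b+1)+2*a*b+a+b+1) )) / Dfun a b c p x"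
  by (simp add: delta2_def)

lemma delta3_eq: "delta3 a b c p x = (- ( (x-6)*(x-5)*(x-4)*(x-3)*((a-b)^2-24*p^2-1) + 2*(x-5)*(x-4)*(x-3)*( a^3 - a^2*(b-2) - a*(b*(b+4)+12*p^2+1) + b^3 + 2*b^2 - 12*p^2*(b+c+1) - b - 2 ) + (x-4)*(x-3)*( a^4 + a^3*(2*b+3) - a^2*(6*b^2+3*b+6*p^2-1) + a*(-12*p^2*(b+2*c) + b*(b*(2*b-3)-8) - 3) - 6*p^2*(b^2+4*b*c+(c-6)*c-1) + (b+1)^2*(b^2+b-2) + 8*p^4 ) + 2*(x-3)*( -(p^2)*(c^2*(3*a+3*b+1)+c*(a+b)*(3*a+3*b+2)-40*a*b-13*c) + a*b*(a-b-1)*(a-b+1)*(a+b) + 4*c*p^4 ) + a^4*(b-1)*b + a^3*b*(-2*b^2+b+1) + a^2*(b^4+b^3+p^2*(-12*b^2+2*b*(6*c+5)-6*c^2+c)-3*b^2+b) + a*p^2*(-(6*b+7)*c^2+4*(b*(3*b+2)+3)*c+2*b*(5*b-11)) - a*(b-1)^2*b*(b+1) + c*p^2*(b^2*(1-6*c)+b*(12-7*c)+5*(c-2)*p^2+c+11) )) / Dfun a b c p x"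
  unfolding delta3_def by (rule neg_aux)

lemma delta4_eq: "delta4 a b c p x = (2*p^2 * ( -8*(x-7)*(x-6)*(x-5)*(x-4) - 4*(x-6)*(x-5)*(x-4)*(3*(a+b+1)+c) + 2*(x-5)*(x-4)*(8*p^2-3*(a+b-1)*(a+b+c+1)) + (x-4)*( -(a^3) - a^2*(3*b+3*c+2) + a*(b*(-3*b-6*c+46)-3*c+4*p^2+1) - (b+3*c+1)*(b^2+b-4*p^2-2) ) + a^3*(3*b-2*c) + a^2*(3*(5-2*b)*b-4*c) + a*(p^2*(5*c-6*b)-4*b*c+3*b*(b*(b+5)-4)+2*c) + 5*c*p^2*(b+c-3) - 2*(b-1)*(b+1)*(b+2)*c )) / Dfun a b c p x"
  by (simp add: delta4_def)

lemma delta5_eq: "delta5 a b c p x = (p^2 * ( 4*(x-8)*(x-7)*(x-6)*(x-5) + 8*(x-7)*(x-6)*(x-5)*(a+b+1) + 6*(x-6)*(x-5)*((a+b)^2-8*p^2-1) - 2*(x-5)*( -(a^3)-3*a^2*b-2*a^2-3*a*b^2+12*p^2*(a+b+c+1)+16*a*b+a-(b^3)-2*b^2+b+2 ) + a^4 + a^3*(3-2*b) + a^2*(b*(6*b-11)-5*p^2+1) - a*(2*b^3+11*b^2-2*b*(13*p^2+6)+20*c*p^2+3) - 5*p^2*(b^2+4*b*c+(c-6)*c-1) + (b+1)^2*(b^2+b-2) + 4*p^4 )) / Dfun a b c p x"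
  by (simp add: delta5_def)

lemma delta6_eq: "delta6 a b c p x = (2*p^4*(5*a^2+a*(-8*b+5*c+12*x-72)+5*b^2+5*b*c+12*b*(x-6)+4*x*(c+4*x)-29*c-196*x-8*p^2+595)) / Dfun a b c p x"
  by (simp add: delta6_def)

lemma delta7_eq: "delta7 a b c p x = (p^4*(-5*a^2+2*a*(b-4*x+28)-5*b^2-8*b*(x-7)-8*(x-14)*x+24*p^2-387)) / Dfun a b c p x"
  by (simp add: delta7_def)

lemma delta8_eq: "delta8 a b c p x = (-(16*p^6 )) / Dfun a b c p x"
  by (simp add: delta8_def)

lemma delta9_eq: "delta9 a b c p x = (4*p^6) / Dfun a b c p x"
  by (simp add: delta9_def)

lemma delta0_eq: assumes "x \<noteq> 0" "c+x-1 \<noteq> 0"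
  shows "delta0 a b c p x = ((2*(x-1)^2*(a*(c-2*b)+c*(b+c-3)) + 4*(c-2)*(x-1)*(c*(a+b)-a*b) + 2*a*b*(c-2)*(c+1)) * x * (c+x-1)) / Dfun a b c p x"
proof -
  have nz: "x * (c+x-1) \<noteq> 0" using assms by simp
  have "((2*(x-1)^2*(a*(c-2*b)+c*(b+c-3)) + 4*(c-2)*(x-1)*(c*(a+b)-a*b) + 2*a*b*(c-2)*(c+1)) * x * (c+x-1)) / Dfun a b c p x = ((2*(x-1)^2*(a*(c-2*b)+c*(b+c-3)) + 4*(c-2)*(x-1)*(c*(a+b)-a*b) + 2*a*b*(c-2)*(c+1)) * (x * (c+x-1))) / (((c-2)*c*(x+1)*(c+x)) * (x * (c+x-1)))"
    by (simp add: Dfun_def ac_simps)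
  also have "\<dots> = delta0 a b c p x"
    unfolding delta0_def by (rule nonzero_mult_divide_mult_cancel_right[OF nz])
  finally show ?thesis by simp
qed

lemma solve_aux:
  fixes D y0 y1 y2 y3 y4 y5 y6 y7 y8 y9 y10 k0 k1 k2 k3 k4 k5 k6 k7 k8 k9 :: complex
  assumes "D \<noteq> 0" "D*y0 - (k0*y1 + k1*y2 + k2*y3 + k3*y4 + k4*y5 + k5*y6 + k6*y7 + k7*y8 + k8*y9 + k9*y10) = 0"
  shows "y0 = k0/D*y1 + k1/D*y2 + k2/D*y3 + k3/D*y4 + k4/D*y5 + k5/D*y6 + k6/D*y7 + k7/D*y8 + k8/D*y9 + k9/D*y10"
  using assms by (simp add: field_simps)




lemma Rinst:
  fixes a b c p xj A B C E :: complex
  assumes "(of_nat k + 3) * (of_nat k + 2 + c) * A = ((of_nat k + 2 + a)*(of_nat k + 2 + b) + p*(2*(of_nat k+2)+c)) * B - p*(2*(of_nat k + 2) - 1 + p + a + b) * C + p^2 * E"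
    and "xj = of_nat k + 2"
  shows "(xj+1)*(xj+c)*A - ((xj+a)*(xj+b) + p*(2*xj+c))*B + p*(2*xj-1+p+a+b)*C - p^2*E = 0"
  using assms by (simp add: algebra_simps)


lemma sum10: "(\<Sum>i\<le>(9::nat). g i) = g 0 + g 1 + g 2 + g 3 + g 4 + g 5 + g 6 + g 7 + g 8 + (g 9 :: complex)"
  by (simp add: eval_nat_numeral)

lemma rec10:
  fixes a b c p :: complex and h :: "nat \<Rightarrow> complex"
  assumes hc: "\<forall>k::nat. c \<noteq> - of_nat k" and hc2: "c \<noteq> 2"
  and R: "\<And>k. (of_nat k + 3) * (of_nat k + 2 + c) * h (k+3) =
     ((of_nat k + 2 + a)*(of_nat k + 2 + b) + p*(2*(of_nat k+2)+c)) * h (k+2)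
     - p*(2*(of_nat k + 2) - 1 + p + a + b) * h (k+1) + p^2 * h k"
  and n: "n \<ge> 9"
  shows "h (n+1) = (\<Sum>i\<le>9. delta i a b c p (of_nat n) * h (n - i))"
proof -
  obtain m where nm: "n = m + 9" using n by (metis add.commute le_Suc_ex)
  define x where "x = (of_nat n :: complex)"
  have c0: "c \<noteq> 0" using hc by (metis minus_zero of_nat_0)
  have "n \<noteq> 0" using n by simp
  then have x0: "x \<noteq> 0" unfolding x_def by simp
  have x1: "x + 1 \<noteq> 0"
  proof
    assume "x + 1 = 0"
    then have "(of_nat (Suc n) :: complex) = 0" unfolding x_def by (simp add: add.commute)
    then show False by (simp only: of_nat_eq_0_iff nat.distinct(1))
  qed
  have cx: "c + x \<noteq> 0" using hc unfolding x_def by (metis add.commute add_eq_0_iff2)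
  have cx1: "c + x - 1 \<noteq> 0"
  proof
    assume "c + x - 1 = 0"
    then have "c = 1 - x" by algebra
    also have "1 - x = - of_nat (m+8)" unfolding x_def nm by simp
    finally have "c = - of_nat (m+8)" .
    then show False using hc by blast
  qed
  have Dnz: "Dfun a b c p x \<noteq> 0" unfolding Dfun_def using c0 hc2 x0 x1 cx cx1 by simp
  have R0: "(((x-0)+1)*((x-0)+c)*h (m+10) - (((x-0)+a)*((x-0)+b) + p*(2*(x-0)+c))*h (m+9) + p*(2*(x-0)-1+p+a+b)*h (m+8) - p^2*h (m+7)) = 0"
  proof -
    have i: "m+7+3 = m+10" "m+7+2 = m+9" "m+7+1 = m+8"  by simp_all
    show ?thesis by (rule Rinst[OF R[of "m+7", unfolded i]]) (simp add: x_def nm)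
  qed
  have R1: "(((x-1)+1)*((x-1)+c)*h (m+9) - (((x-1)+a)*((x-1)+b) + p*(2*(x-1)+c))*h (m+8) + p*(2*(x-1)-1+p+a+b)*h (m+7) - p^2*h (m+6)) = 0"
  proof -
    have i: "m+6+3 = m+9" "m+6+2 = m+8" "m+6+1 = m+7"  by simp_all
    show ?thesis by (rule Rinst[OF R[of "m+6", unfolded i]]) (simp add: x_def nm)
  qed
  have R2: "(((x-2)+1)*((x-2)+c)*h (m+8) - (((x-2)+a)*((x-2)+b) + p*(2*(x-2)+c))*h (m+7) + p*(2*(x-2)-1+p+a+b)*h (m+6) - p^2*h (m+5)) = 0"
  proof -
    have i: "m+5+3 = m+8" "m+5+2 = m+7" "m+5+1 = m+6"  by simp_all
    show ?thesis by (rule Rinst[OF R[of "m+5", unfolded i]]) (simp add: x_def nm)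
  qed
  have R3: "(((x-3)+1)*((x-3)+c)*h (m+7) - (((x-3)+a)*((x-3)+b) + p*(2*(x-3)+c))*h (m+6) + p*(2*(x-3)-1+p+a+b)*h (m+5) - p^2*h (m+4)) = 0"
  proof -
    have i: "m+4+3 = m+7" "m+4+2 = m+6" "m+4+1 = m+5"  by simp_all
    show ?thesis by (rule Rinst[OF R[of "m+4", unfolded i]]) (simp add: x_def nm)
  qed
  have R4: "(((x-4)+1)*((x-4)+c)*h (m+6) - (((x-4)+a)*((x-4)+b) + p*(2*(x-4)+c))*h (m+5) + p*(2*(x-4)-1+p+a+b)*h (m+4) - p^2*h (m+3)) = 0"
  proof -
    have i: "m+3+3 = m+6" "m+3+2 = m+5" "m+3+1 = m+4"  by simp_all
    show ?thesis by (rule Rinst[OF R[of "m+3", unfolded i]]) (simp add: x_def nm)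
  qed
  have R5: "(((x-5)+1)*((x-5)+c)*h (m+5) - (((x-5)+a)*((x-5)+b) + p*(2*(x-5)+c))*h (m+4) + p*(2*(x-5)-1+p+a+b)*h (m+3) - p^2*h (m+2)) = 0"
  proof -
    have i: "m+2+3 = m+5" "m+2+2 = m+4" "m+2+1 = m+3"  by simp_all
    show ?thesis by (rule Rinst[OF R[of "m+2", unfolded i]]) (simp add: x_def nm)
  qed
  have R6: "(((x-6)+1)*((x-6)+c)*h (m+4) - (((x-6)+a)*((x-6)+b) + p*(2*(x-6)+c))*h (m+3) + p*(2*(x-6)-1+p+a+b)*h (m+2) - p^2*h (m+1)) = 0"
  proof -
    have i: "m+1+3 = m+4" "m+1+2 = m+3" "m+1+1 = m+2"  by simp_all
    show ?thesis by (rule Rinst[OF R[of "m+1", unfolded i]]) (simp add: x_def nm)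
  qed
  have R7: "(((x-7)+1)*((x-7)+c)*h (m+3) - (((x-7)+a)*((x-7)+b) + p*(2*(x-7)+c))*h (m+2) + p*(2*(x-7)-1+p+a+b)*h (m+1) - p^2*h m) = 0"
  proof -
    have i: "m+0+3 = m+3" "m+0+2 = m+2" "m+0+1 = m+1" "m+0 = m" by simp_all
    show ?thesis by (rule Rinst[OF R[of "m+0", unfolded i]]) (simp add: x_def nm)
  qed
  have main0: "(c-2)*c*x*(x+1)*(c+x-1)*(c+x) * h (m+10) - (((2*(x-1)^2*(a*(c-2*b)+c*(b+c-3)) + 4*(c-2)*(x-1)*(c*(a+b)-a*b) + 2*a*b*(c-2)*(c+1)) * x * (c+x-1))*h (m+9) + (( -(x-4)*(x-3)*(x-2)*(x-1)*(a^2+4*c*(a+b)-10*a*b+b^2+c^2-6*c-4*p^2-1) + 2*(x-3)*(x-2)*(x-1)*( a^2*(4*b-3*c) + a*(2*(b-1)*c+4*b*(b+3)-3*c^2) - c*(b*(3*b+3*c+2)+c-4*p^2-13) ) + (x-2)*(x-1)*( a^2*(8*b^2+b*(4*c+6)-6*c^2+c) + a*(-(10*b+7)*c^2+4*(b*(b+3)+3)*c+6*b*(b+1)) + c*(b^2*(1-6*c)+b*(12-7*c)+6*(c-2)*p^2+c+11) ) + (c-2)*(a^2*b*(c-b*(c+2)) + a*b*(b+1)*c + c^2*(c+1)*p^2) + 2*(x-1)*(a^2*b*(b*(4*c-2)-3*(c-1)*c) - a*b*c*(3*b*(c-1)+c-5) + (c-2)*c*(c+1)*p^2) ))*h (m+8)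 + (2 * ( (x-5)*(x-4)*(x-3)*(x-2)*(a^2+a*(c-4*b)+(b-1)*(b+c+1)-8*p^2) + (x-4)*(x-3)*(x-2)*( a^3 + a^2*(-5*b+3*c+2) - a*(b*(5*b-2*c+14)-3*c+4*p^2+1) + (b+3*c+1)*(b^2+b-4*p^2-2) ) - (x-3)*(x-2)*( a^3*(b-2*c) + a^2*(b*(10*b+9)-4*(b+1)*c) + a*(b*(b+1)*(b-4*c+8)+6*c*p^2+2*c) + 2*c*(-(b^3)-2*b^2+3*p^2*(b+c-3)+b+2) ) - (x-2)*( a^3*b*(4*b-3*c+2) + a^2*b*(2*b+1)*(2*b-c) - a*(p^2*(10*b-3*c^2+c)+(b-1)*b*(b*(3*c-2)+4*c-2)) + c*p^2*(b*(3*c-1)+c^2-9) ) - (c+1)*p^2*(c^2*(2*a+2*b+1)-3*(a+1)*(b+1)*c+4*a*b) - (a-1)*a*(b-1)*b*(-c*(a+b+1)+2*a*b+a+b+1) ))*h (m+7) + (- ( (x-6)*(x-5)*(x-4)*(x-3)*((a-b)^2-24*p^2-1) + 2*(x-5)*(x-4)*(x-3)*( a^3 - a^2*(b-2) - a*(b*(b+4)+12*p^2+1) + b^3 + 2*b^2 - 12*p^2*(b+c+1) - b - 2 ) + (x-4)*(x-3)*( a^4 + a^3*(2*b+3) - a^2*(6*b^2+3*b+6*p^2-1) + a*(-12*p^2*(b+2*c) + b*(b*(2*b-3)-8) - 3) - 6*p^2*(b^2+4*b*c+(c-6)*c-1) + (b+1)^2*(b^2+b-2) + 8*p^4 ) +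 2*(x-3)*( -(p^2)*(c^2*(3*a+3*b+1)+c*(a+b)*(3*a+3*b+2)-40*a*b-13*c) + a*b*(a-b-1)*(a-b+1)*(a+b) + 4*c*p^4 ) + a^4*(b-1)*b + a^3*b*(-2*b^2+b+1) + a^2*(b^4+b^3+p^2*(-12*b^2+2*b*(6*c+5)-6*c^2+c)-3*b^2+b) + a*p^2*(-(6*b+7)*c^2+4*(b*(3*b+2)+3)*c+2*b*(5*b-11)) - a*(b-1)^2*b*(b+1) + c*p^2*(b^2*(1-6*c)+b*(12-7*c)+5*(c-2)*p^2+c+11) ))*h (m+6) + (2*p^2 * ( -8*(x-7)*(x-6)*(x-5)*(x-4) - 4*(x-6)*(x-5)*(x-4)*(3*(a+b+1)+c) + 2*(x-5)*(x-4)*(8*p^2-3*(a+b-1)*(a+b+c+1)) + (x-4)*( -(a^3) - a^2*(3*b+3*c+2) + a*(b*(-3*b-6*c+46)-3*c+4*p^2+1) - (b+3*c+1)*(b^2+b-4*p^2-2) ) + a^3*(3*b-2*c) + a^2*(3*(5-2*b)*b-4*c) + a*(p^2*(5*c-6*b)-4*b*c+3*b*(b*(b+5)-4)+2*c) + 5*c*p^2*(b+c-3) - 2*(b-1)*(b+1)*(b+2)*c ))*h (m+5) + (p^2 * ( 4*(x-8)*(x-7)*(x-6)*(x-5) + 8*(x-7)*(x-6)*(x-5)*(a+b+1) + 6*(x-6)*(x-5)*((a+b)^2-8*p^2-1) - 2*(x-5)*( -(a^3)-3*a^2*b-2*a^2-3*a*b^2+12*p^2*(a+b+c+1)+16*a*b+a-(b^3)-2*b^2+b+2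 ) + a^4 + a^3*(3-2*b) + a^2*(b*(6*b-11)-5*p^2+1) - a*(2*b^3+11*b^2-2*b*(13*p^2+6)+20*c*p^2+3) - 5*p^2*(b^2+4*b*c+(c-6)*c-1) + (b+1)^2*(b^2+b-2) + 4*p^4 ))*h (m+4) + (2*p^4*(5*a^2+a*(-8*b+5*c+12*x-72)+5*b^2+5*b*c+12*b*(x-6)+4*x*(c+4*x)-29*c-196*x-8*p^2+595))*h (m+3) + (p^4*(-5*a^2+2*a*(b-4*x+28)-5*b^2-8*b*(x-7)-8*(x-14)*x+24*p^2-387))*h (m+2) + (-(16*p^6 ))*h (m+1) + (4*p^6)*h m) = 0"
    using ident[where a=a and b=b and c=c and p=p and x=x and wa="h (m+10)" and wb="h (m+9)" and wc="h (m+8)" and wd="h (m+7)" and we="h (m+6)" and wf="h (m+5)" and wg="h (m+4)" and wh="h (m+3)" and wi="h (m+2)" and wj="h (m+1)" and wk="h m"] unfolding R0 R1 R2 R3 R4 R5 R6 R7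
    by (simp only: mult_zero_right add_0_right minus_zero)
  have main: "Dfun a b c p x * h (m+10) - (((2*(x-1)^2*(a*(c-2*b)+c*(b+c-3)) + 4*(c-2)*(x-1)*(c*(a+b)-a*b) + 2*a*b*(c-2)*(c+1)) * x * (c+x-1))*h (m+9) + (( -(x-4)*(x-3)*(x-2)*(x-1)*(a^2+4*c*(a+b)-10*a*b+b^2+c^2-6*c-4*p^2-1) + 2*(x-3)*(x-2)*(x-1)*( a^2*(4*b-3*c) + a*(2*(b-1)*c+4*b*(b+3)-3*c^2) - c*(b*(3*b+3*c+2)+c-4*p^2-13) ) + (x-2)*(x-1)*( a^2*(8*b^2+b*(4*c+6)-6*c^2+c) + a*(-(10*b+7)*c^2+4*(b*(b+3)+3)*c+6*b*(b+1)) + c*(b^2*(1-6*c)+b*(12-7*c)+6*(c-2)*p^2+c+11) ) + (c-2)*(a^2*b*(c-b*(c+2)) + a*b*(b+1)*c + c^2*(c+1)*p^2) + 2*(x-1)*(a^2*b*(b*(4*c-2)-3*(c-1)*c) - a*b*c*(3*b*(c-1)+c-5) + (c-2)*c*(c+1)*p^2) ))*h (m+8) + (2 * ( (x-5)*(x-4)*(x-3)*(x-2)*(a^2+a*(c-4*b)+(b-1)*(b+c+1)-8*p^2) + (x-4)*(x-3)*(x-2)*( a^3 + a^2*(-5*b+3*c+2) - a*(b*(5*b-2*c+14)-3*c+4*p^2+1) + (b+3*c+1)*(b^2+b-4*p^2-2) ) - (x-3)*(x-2)*( a^3*(b-2*c) + a^2*(b*(10*b+9)-4*(b+1)*c) +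 a*(b*(b+1)*(b-4*c+8)+6*c*p^2+2*c) + 2*c*(-(b^3)-2*b^2+3*p^2*(b+c-3)+b+2) ) - (x-2)*( a^3*b*(4*b-3*c+2) + a^2*b*(2*b+1)*(2*b-c) - a*(p^2*(10*b-3*c^2+c)+(b-1)*b*(b*(3*c-2)+4*c-2)) + c*p^2*(b*(3*c-1)+c^2-9) ) - (c+1)*p^2*(c^2*(2*a+2*b+1)-3*(a+1)*(b+1)*c+4*a*b) - (a-1)*a*(b-1)*b*(-c*(a+b+1)+2*a*b+a+b+1) ))*h (m+7) + (- ( (x-6)*(x-5)*(x-4)*(x-3)*((a-b)^2-24*p^2-1) + 2*(x-5)*(x-4)*(x-3)*( a^3 - a^2*(b-2) - a*(b*(b+4)+12*p^2+1) + b^3 + 2*b^2 - 12*p^2*(b+c+1) - b - 2 ) + (x-4)*(x-3)*( a^4 + a^3*(2*b+3) - a^2*(6*b^2+3*b+6*p^2-1) + a*(-12*p^2*(b+2*c) + b*(b*(2*b-3)-8) - 3) - 6*p^2*(b^2+4*b*c+(c-6)*c-1) + (b+1)^2*(b^2+b-2) + 8*p^4 ) + 2*(x-3)*( -(p^2)*(c^2*(3*a+3*b+1)+c*(a+b)*(3*a+3*b+2)-40*a*b-13*c) + a*b*(a-b-1)*(a-b+1)*(a+b) + 4*c*p^4 ) + a^4*(b-1)*b + a^3*b*(-2*b^2+b+1) + a^2*(b^4+b^3+p^2*(-12*b^2+2*b*(6*c+5)-6*c^2+c)-3*b^2+b) + a*p^2*(-(6*b+7)*c^2+4*(b*(3*b+2)+3)*c+2*b*(5*b-11))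 - a*(b-1)^2*b*(b+1) + c*p^2*(b^2*(1-6*c)+b*(12-7*c)+5*(c-2)*p^2+c+11) ))*h (m+6) + (2*p^2 * ( -8*(x-7)*(x-6)*(x-5)*(x-4) - 4*(x-6)*(x-5)*(x-4)*(3*(a+b+1)+c) + 2*(x-5)*(x-4)*(8*p^2-3*(a+b-1)*(a+b+c+1)) + (x-4)*( -(a^3) - a^2*(3*b+3*c+2) + a*(b*(-3*b-6*c+46)-3*c+4*p^2+1) - (b+3*c+1)*(b^2+b-4*p^2-2) ) + a^3*(3*b-2*c) + a^2*(3*(5-2*b)*b-4*c) + a*(p^2*(5*c-6*b)-4*b*c+3*b*(b*(b+5)-4)+2*c) + 5*c*p^2*(b+c-3) - 2*(b-1)*(b+1)*(b+2)*c ))*h (m+5) + (p^2 * ( 4*(x-8)*(x-7)*(x-6)*(x-5) + 8*(x-7)*(x-6)*(x-5)*(a+b+1) + 6*(x-6)*(x-5)*((a+b)^2-8*p^2-1) - 2*(x-5)*( -(a^3)-3*a^2*b-2*a^2-3*a*b^2+12*p^2*(a+b+c+1)+16*a*b+a-(b^3)-2*b^2+b+2 ) + a^4 + a^3*(3-2*b) + a^2*(b*(6*b-11)-5*p^2+1) - a*(2*b^3+11*b^2-2*b*(13*p^2+6)+20*c*p^2+3) - 5*p^2*(b^2+4*b*c+(c-6)*c-1) + (b+1)^2*(b^2+b-2) + 4*p^4 ))*h (m+4) + (2*p^4*(5*a^2+a*(-8*b+5*c+12*x-72)+5*b^2+5*b*c+12*b*(x-6)+4*x*(c+4*x)-29*c-196*x-8*p^2+595))*h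 (m+3) + (p^4*(-5*a^2+2*a*(b-4*x+28)-5*b^2-8*b*(x-7)-8*(x-14)*x+24*p^2-387))*h (m+2) + (-(16*p^6 ))*h (m+1) + (4*p^6)*h m) = 0"
    unfolding Dfun_def by (rule main0)
  have sol: "h (m+10) = ((2*(x-1)^2*(a*(c-2*b)+c*(b+c-3)) + 4*(c-2)*(x-1)*(c*(a+b)-a*b) + 2*a*b*(c-2)*(c+1)) * x * (c+x-1)) / Dfun a b c p x * h (m+9) + (( -(x-4)*(x-3)*(x-2)*(x-1)*(a^2+4*c*(a+b)-10*a*b+b^2+c^2-6*c-4*p^2-1) + 2*(x-3)*(x-2)*(x-1)*( a^2*(4*b-3*c) + a*(2*(b-1)*c+4*b*(b+3)-3*c^2) - c*(b*(3*b+3*c+2)+c-4*p^2-13) ) + (x-2)*(x-1)*( a^2*(8*b^2+b*(4*c+6)-6*c^2+c) + a*(-(10*b+7)*c^2+4*(b*(b+3)+3)*c+6*b*(b+1)) + c*(b^2*(1-6*c)+b*(12-7*c)+6*(c-2)*p^2+c+11) ) + (c-2)*(a^2*b*(c-b*(c+2)) + a*b*(b+1)*c + c^2*(c+1)*p^2) + 2*(x-1)*(a^2*b*(b*(4*c-2)-3*(c-1)*c) - a*b*c*(3*b*(c-1)+c-5) + (c-2)*c*(c+1)*p^2) )) / Dfun a b c p x * h (m+8) + (2 * ( (x-5)*(x-4)*(x-3)*(x-2)*(a^2+a*(c-4*b)+(b-1)*(b+c+1)-8*p^2) + (x-4)*(x-3)*(x-2)*( a^3 + a^2*(-5*b+3*c+2)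 - a*(b*(5*b-2*c+14)-3*c+4*p^2+1) + (b+3*c+1)*(b^2+b-4*p^2-2) ) - (x-3)*(x-2)*( a^3*(b-2*c) + a^2*(b*(10*b+9)-4*(b+1)*c) + a*(b*(b+1)*(b-4*c+8)+6*c*p^2+2*c) + 2*c*(-(b^3)-2*b^2+3*p^2*(b+c-3)+b+2) ) - (x-2)*( a^3*b*(4*b-3*c+2) + a^2*b*(2*b+1)*(2*b-c) - a*(p^2*(10*b-3*c^2+c)+(b-1)*b*(b*(3*c-2)+4*c-2)) + c*p^2*(b*(3*c-1)+c^2-9) ) - (c+1)*p^2*(c^2*(2*a+2*b+1)-3*(a+1)*(b+1)*c+4*a*b) - (a-1)*a*(b-1)*b*(-c*(a+b+1)+2*a*b+a+b+1) )) / Dfun a b c p x * h (m+7) + (- ( (x-6)*(x-5)*(x-4)*(x-3)*((a-b)^2-24*p^2-1) + 2*(x-5)*(x-4)*(x-3)*( a^3 - a^2*(b-2) - a*(b*(b+4)+12*p^2+1) + b^3 + 2*b^2 - 12*p^2*(b+c+1) - b - 2 ) + (x-4)*(x-3)*( a^4 + a^3*(2*b+3) - a^2*(6*b^2+3*b+6*p^2-1) + a*(-12*p^2*(b+2*c) + b*(b*(2*b-3)-8) - 3) - 6*p^2*(b^2+4*b*c+(c-6)*c-1) + (b+1)^2*(b^2+b-2) + 8*p^4 ) + 2*(x-3)*( -(p^2)*(c^2*(3*a+3*b+1)+c*(a+b)*(3*a+3*b+2)-40*a*b-13*c) + a*b*(a-b-1)*(a-b+1)*(a+b) + 4*c*p^4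 ) + a^4*(b-1)*b + a^3*b*(-2*b^2+b+1) + a^2*(b^4+b^3+p^2*(-12*b^2+2*b*(6*c+5)-6*c^2+c)-3*b^2+b) + a*p^2*(-(6*b+7)*c^2+4*(b*(3*b+2)+3)*c+2*b*(5*b-11)) - a*(b-1)^2*b*(b+1) + c*p^2*(b^2*(1-6*c)+b*(12-7*c)+5*(c-2)*p^2+c+11) )) / Dfun a b c p x * h (m+6) + (2*p^2 * ( -8*(x-7)*(x-6)*(x-5)*(x-4) - 4*(x-6)*(x-5)*(x-4)*(3*(a+b+1)+c) + 2*(x-5)*(x-4)*(8*p^2-3*(a+b-1)*(a+b+c+1)) + (x-4)*( -(a^3) - a^2*(3*b+3*c+2) + a*(b*(-3*b-6*c+46)-3*c+4*p^2+1) - (b+3*c+1)*(b^2+b-4*p^2-2) ) + a^3*(3*b-2*c) + a^2*(3*(5-2*b)*b-4*c) + a*(p^2*(5*c-6*b)-4*b*c+3*b*(b*(b+5)-4)+2*c) + 5*c*p^2*(b+c-3) - 2*(b-1)*(b+1)*(b+2)*c )) / Dfun a b c p x * h (m+5) + (p^2 * ( 4*(x-8)*(x-7)*(x-6)*(x-5) + 8*(x-7)*(x-6)*(x-5)*(a+b+1) + 6*(x-6)*(x-5)*((a+b)^2-8*p^2-1) - 2*(x-5)*( -(a^3)-3*a^2*b-2*a^2-3*a*b^2+12*p^2*(a+b+c+1)+16*a*b+a-(b^3)-2*b^2+b+2 ) + a^4 + a^3*(3-2*b) + a^2*(b*(6*b-11)-5*p^2+1) - a*(2*b^3+11*b^2-2*b*(13*p^2+6)+20*c*p^2+3)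 - 5*p^2*(b^2+4*b*c+(c-6)*c-1) + (b+1)^2*(b^2+b-2) + 4*p^4 )) / Dfun a b c p x * h (m+4) + (2*p^4*(5*a^2+a*(-8*b+5*c+12*x-72)+5*b^2+5*b*c+12*b*(x-6)+4*x*(c+4*x)-29*c-196*x-8*p^2+595)) / Dfun a b c p x * h (m+3) + (p^4*(-5*a^2+2*a*(b-4*x+28)-5*b^2-8*b*(x-7)-8*(x-14)*x+24*p^2-387)) / Dfun a b c p x * h (m+2) + (-(16*p^6 )) / Dfun a b c p x * h (m+1) + (4*p^6) / Dfun a b c p x * h m"
    by (rule solve_aux[OF Dnz main])
  have e: "(\<Sum>i\<le>9. delta i a b c p x * h (n - i)) = delta0 a b c p x * h (m+9) + delta1 a b c p x * h (m+8) + delta2 a b c p x * h (m+7) + delta3 a b c p x * h (m+6) + delta4 a b c p x * h (m+5) + delta5 a b c p x * h (m+4) + delta6 a b c p x * h (m+3) + delta7 a b c p x * h (m+2) + delta8 a b c p x * h (m+1) + delta9 a b c p x * h m"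
    unfolding sum10 delta_def nm by (simp add: ac_simps)
  have hn: "h (n+1) = h (m+10)" unfolding nm by (simp add: add.commute)
  show ?thesis
    unfolding x_def[symmetric] e delta0_eq[OF x0 cx1] delta1_eq delta2_eq delta3_eq delta4_eq delta5_eq delta6_eq delta7_eq delta8_eq delta9_eq hn
    by (rule sol)
qed




lemma ratio_lim:
  fixes a b c :: complex
  assumes hc: "\<forall>k::nat. c \<noteq> - of_nat k"
  shows "(\<lambda>n. (a + of_nat n) * (b + of_nat n) / ((c + of_nat n) * (of_nat n + 1))) \<longlonglongrightarrow> 1"
proof -
  have lim: "(\<lambda>n. ((1 + a / of_nat n) * (1 + b / of_nat n)) / ((1 + c / of_nat n) * (1 + 1 / of_nat n))) \<longlonglongrightarrow> ((1 + 0) * (1 + 0)) / ((1 + 0) * (1 + 0::complex))"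
    by (intro tendsto_intros) simp_all
  have ev: "\<forall>\<^sub>F n in sequentially. ((1 + a / of_nat n) * (1 + b / of_nat n)) / ((1 + c / of_nat n) * (1 + 1 / of_nat n))
        = (a + of_nat n) * (b + of_nat n) / ((c + of_nat n) * (of_nat n + 1))"
    using eventually_ge_at_top[of "1::nat"]
  proof eventually_elim
    case (elim n)
    then have n0: "(of_nat n :: complex) \<noteq> 0" by simp
    have "((1 + a / of_nat n) * (1 + b / of_nat n)) = (a + of_nat n) * (b + of_nat n) / (of_nat n * of_nat n)"
      using n0 by (simp add: field_simps)
    moreover have "((1 + c / of_nat n) * (1 + 1 / of_nat n)) = (c + of_nat n) * (of_nat n + 1) / (of_nat n * of_nat n)"
      using n0 by (simp add: field_simps)
    ultimately show ?case using n0 by simp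
  qed
  show ?thesis using Lim_transform_eventually[OF lim ev] by simp
qed

lemma fc_summable:
  fixes a b c z :: complex
  assumes hc: "\<forall>k::nat. c \<noteq> - of_nat k" and z: "norm z < 1"
  shows "summable (\<lambda>n. norm (fc a b c n * z ^ n))"
proof -
  define C where "C = (1 + norm z) / 2"
  have C1: "C < 1" using z by (simp add: C_def)
  have zC: "norm z < C" using z by (simp add: C_def)
  let ?r = "\<lambda>n. (a + of_nat n) * (b + of_nat n) / ((c + of_nat n) * (of_nat n + 1))"
  have "(\<lambda>n. norm (?r n) * norm z) \<longlonglongrightarrow> norm (1::complex) * norm z"
    by (intro tendsto_intros ratio_lim[OF hc])
  then have "\<forall>\<^sub>F n in sequentially. norm (?r n) * norm z < C"
    using zC by (intro order_tendstoD(2)) auto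
  then obtain N where N: "\<And>n. n \<ge> N \<Longrightarrow> norm (?r n) * norm z < C"
    by (auto simp: eventually_sequentially)
  show ?thesis
  proof (rule summable_ratio_test[OF C1, where N=N])
    fix n assume "n \<ge> N"
    have h1: "c + of_nat n \<noteq> 0" using hc by (metis add.commute add_eq_0_iff2)
    have h4: "(of_nat n + 1 :: complex) \<noteq> 0"
      by (metis of_nat_Suc of_nat_eq_0_iff add.commute nat.distinct(1))
    have P: "(of_nat n + 1) * (of_nat n + c) \<noteq> (0::complex)" using h1 h4 by (simp add: add.commute)
    have "fc a b c (Suc n) = ((of_nat n + 1) * (of_nat n + c) * fc a b c (Suc n)) / ((of_nat n + 1) * (of_nat n + c))"
      using P by simp
    also have "\<dots> = (of_nat n + a) * (of_nat n + b) * fc a b c n / ((of_nat n + 1) * (of_nat n + c))"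
      unfolding fc_rec[OF hc, of n a b] ..
    also have "\<dots> = ?r n * fc a b c n"
      by (simp add: ac_simps)
    finally have eq: "fc a b c (Suc n) = ?r n * fc a b c n" .
    have ee: "fc a b c (Suc n) * z ^ Suc n = (?r n * z) * (fc a b c n * z ^ n)"
      unfolding eq power_Suc by (simp only: mult_ac)
    have "norm (norm (fc a b c (Suc n) * z ^ Suc n)) = (norm (?r n) * norm z) * norm (fc a b c n * z ^ n)"
      unfolding ee norm_mult by simp
    also have "\<dots> \<le> C * norm (norm (fc a b c n * z ^ n))"
      using N[OF \<open>n \<ge> N\<close>] by (simp add: mult_right_mono)
    finally show "norm (norm (fc a b c (Suc n) * z ^ Suc n)) \<le> C * norm (norm (fc a b c n * z ^ n))" .
  qed
qed

lemma hs_sums: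
  fixes a b c q z :: complex
  assumes hc: "\<forall>k::nat. c \<noteq> - of_nat k" and z: "norm z < 1"
  shows "(\<lambda>n. hs a b c q n * z ^ n) sums (exp (q * z) * hypergeomF a b c z)"
proof -
  have e1: "summable (\<lambda>n. norm (q ^ n / fact n * z ^ n))"
    using summable_norm_exp[of "q*z"] by (simp add: power_mult_distrib scaleR_conv_of_real divide_inverse ac_simps norm_mult norm_divide norm_power)
  have e2: "(\<lambda>n. q ^ n / fact n * z ^ n) sums exp (q * z)"
    using exp_converges[of "q*z"] by (simp add: power_mult_distrib scaleR_conv_of_real divide_inverse ac_simps)
  have f1: "summable (\<lambda>n. norm (fc a b c n * z ^ n))" by (rule fc_summable[OF hc z])
  have f2: "(\<lambda>n. fc a b c n * z ^ n) sums hypergeomF a b c z"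
    unfolding hypergeomF_def fc_def[symmetric]
    using summable_norm_cancel[OF f1] by (simp add: summable_sums)
  have "(\<lambda>k. \<Sum>i\<le>k. (q ^ i / fact i * z ^ i) * (fc a b c (k - i) * z ^ (k - i))) sums
        ((\<Sum>k. q ^ k / fact k * z ^ k) * (\<Sum>k. fc a b c k * z ^ k))"
    by (rule Cauchy_product_sums[OF e1 f1])
  moreover have "\<And>k. (\<Sum>i\<le>k. (q ^ i / fact i * z ^ i) * (fc a b c (k - i) * z ^ (k - i))) = hs a b c q k * z ^ k"
    unfolding hs_def sum_distrib_right
    by (intro sum.cong refl) (auto simp: power_add[symmetric] ac_simps)
  moreover have "(\<Sum>k. q ^ k / fact k * z ^ k) = exp (q * z)" using e2 by (simp add: sums_iff)
  moreover have "(\<Sum>k. fc a b c k * z ^ k) = hypergeomF a b c z" using f2 by (simp add: sums_iff)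
  ultimately show ?thesis by simp
qed




lemma delta_neg: "delta i a b c (-p) x = delta i a b c p x"
  by (simp add: delta_def delta0_def delta1_def delta2_def delta3_def delta4_def delta5_def
      delta6_def delta7_def delta8_def delta9_def Dfun_def)

lemma u_eq:
  fixes a b c p :: complex and u :: "nat \<Rightarrow> complex"
  assumes hc: "\<forall>k::nat. c \<noteq> - of_nat k"
    and hu: "\<forall>z::complex. norm z < 1 \<longrightarrow> (\<lambda>n. u n * z ^ n) sums (cosh (p * z) * hypergeomF a b c z)"
  shows "u n = (hs a b c p n + hs a b c (-p) n) / 2"
proof -
  define v where "v n = (hs a b c p n + hs a b c (-p) n) / 2" for n
  have vs: "(\<lambda>n. v n * z ^ n) sums (cosh (p * z) * hypergeomF a b c z)" if z: "norm z < 1" for z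
  proof -
    have "(\<lambda>n. (hs a b c p n * z ^ n + hs a b c (-p) n * z ^ n) / 2) sums
           ((exp (p * z) * hypergeomF a b c z + exp ((-p) * z) * hypergeomF a b c z) / 2)"
      by (intro sums_divide sums_add hs_sums[OF hc z])
    moreover have "cosh (p * z) = (exp (p * z) + exp (-(p * z))) / 2"
      by (simp add: cosh_def scaleR_conv_of_real field_simps)
    ultimately show ?thesis
      by (simp add: v_def ring_distribs add_divide_distrib)
  qed
  have "Abs_fps u = Abs_fps v"
  proof (rule eval_fps_eqD)
    have s1: "summable (\<lambda>n. u n * (1/2) ^ n)"
      using hu[rule_format, of "1/2"] by (auto intro: sums_summable)
    have s2: "summable (\<lambda>n. v n * (1/2) ^ n)"
      using vs[of "1/2"] by (auto intro: sums_summable)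
    have "conv_radius u \<ge> norm (1/2 :: complex)" by (rule conv_radius_geI[OF s1])
    then show "fps_conv_radius (Abs_fps u) > 0"
      unfolding fps_conv_radius_def by (simp add: zero_less_iff_neq_zero less_le_trans[of 0 "ereal (1/2)"] )
    have "conv_radius v \<ge> norm (1/2 :: complex)" by (rule conv_radius_geI[OF s2])
    then show "fps_conv_radius (Abs_fps v) > 0"
      unfolding fps_conv_radius_def by (simp add: less_le_trans[of 0 "ereal (1/2)"])
    show "\<forall>\<^sub>F z in nhds 0. eval_fps (Abs_fps u) z = eval_fps (Abs_fps v) z"
    proof (rule eventually_mono[OF eventually_nhds_in_open[of "ball 0 1" "0::complex"]])
      fix z :: complex assume "z \<in> ball 0 1"
      then have z: "norm z < 1" by simp
      show "eval_fps (Abs_fps u) z = eval_fps (Abs_fps v) z"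
        unfolding eval_fps_def using hu z vs[OF z] by (simp add: sums_iff)
    qed simp_all
  qed
  then have "fps_nth (Abs_fps u) n = fps_nth (Abs_fps v) n" by simp
  then show ?thesis by (simp add: v_def)
qed


lemma sum1: "(\<Sum>i\<le>(1::nat). g i) = g 0 + g 1 + (0::complex)"
  by (simp add: eval_nat_numeral)

lemma sum2: "(\<Sum>i\<le>(2::nat). g i) = g 0 + g 1 + g 2 + (0::complex)"
  by (simp add: eval_nat_numeral)

lemma sum3: "(\<Sum>i\<le>(3::nat). g i) = g 0 + g 1 + g 2 + g 3 + (0::complex)"
  by (simp add: eval_nat_numeral)

lemma sum4: "(\<Sum>i\<le>(4::nat). g i) = g 0 + g 1 + g 2 + g 3 + g 4 + (0::complex)"
  by (simp add: eval_nat_numeral)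

lemma sum5: "(\<Sum>i\<le>(5::nat). g i) = g 0 + g 1 + g 2 + g 3 + g 4 + g 5 + (0::complex)"
  by (simp add: eval_nat_numeral)

lemma sum6: "(\<Sum>i\<le>(6::nat). g i) = g 0 + g 1 + g 2 + g 3 + g 4 + g 5 + g 6 + (0::complex)"
  by (simp add: eval_nat_numeral)

lemma sum7: "(\<Sum>i\<le>(7::nat). g i) = g 0 + g 1 + g 2 + g 3 + g 4 + g 5 + g 6 + g 7 + (0::complex)"
  by (simp add: eval_nat_numeral)

lemma sum8: "(\<Sum>i\<le>(8::nat). g i) = g 0 + g 1 + g 2 + g 3 + g 4 + g 5 + g 6 + g 7 + g 8 + (0::complex)"
  by (simp add: eval_nat_numeral)

lemma sum9: "(\<Sum>i\<le>(9::nat). g i) = g 0 + g 1 + g 2 + g 3 + g 4 + g 5 + g 6 + g 7 + g 8 + g 9 + (0::complex)"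
  by (simp add: eval_nat_numeral)

lemma init0:
  fixes a b c p :: complex
  assumes hc: "\<forall>k::nat. c \<noteq> - of_nat k"
  shows "(hs a b c p 0 + hs a b c (-p) 0) / 2 = 1"
proof -
  have nz: "\<And>k. pochhammer c k \<noteq> 0" using poch_nz[OF hc] .
  have c0: "c \<noteq> 0" using nz[of 1] by simp
  show ?thesis
    unfolding hs_def fc_def
    using nz[of 3] nz[of 5] nz[of 7] nz[of 9] nz[of 2] nz[of 4] nz[of 6] nz[of 8] c0
    by (simp add: field_simps fact_numeral)
qed

lemma init1:
  fixes a b c p :: complex
  assumes hc: "\<forall>k::nat. c \<noteq> - of_nat k"
  shows "(hs a b c p 1 + hs a b c (-p) 1) / 2 = a * b / c"
proof -
  have nz: "\<And>k. pochhammer c k \<noteq> 0" using poch_nz[OF hc] .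
  have c0: "c \<noteq> 0" using nz[of 1] by simp
  show ?thesis
    unfolding hs_def sum1 fc_def
    using nz[of 3] nz[of 5] nz[of 7] nz[of 9] nz[of 2] nz[of 4] nz[of 6] nz[of 8] c0
    by (simp add: field_simps fact_numeral)
qed

lemma init2:
  fixes a b c p :: complex
  assumes hc: "\<forall>k::nat. c \<noteq> - of_nat k"
  shows "(hs a b c p 2 + hs a b c (-p) 2) / 2 = pochhammer a 2 * pochhammer b 2 / (2 * pochhammer c 2) + p^2 / 2"
proof -
  have nz: "\<And>k. pochhammer c k \<noteq> 0" using poch_nz[OF hc] .
  have c0: "c \<noteq> 0" using nz[of 1] by simp
  show ?thesis
    unfolding hs_def sum2 fc_def
    using nz[of 3] nz[of 5] nz[of 7] nz[of 9] nz[of 2] nz[of 4] nz[of 6] nz[of 8] c0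
    by (simp add: field_simps fact_numeral)
qed

lemma init3:
  fixes a b c p :: complex
  assumes hc: "\<forall>k::nat. c \<noteq> - of_nat k"
  shows "(hs a b c p 3 + hs a b c (-p) 3) / 2 = a * b * p^2 / (2 * c) + pochhammer a 3 * pochhammer b 3 / (6 * pochhammer c 3)"
proof -
  have nz: "\<And>k. pochhammer c k \<noteq> 0" using poch_nz[OF hc] .
  have c0: "c \<noteq> 0" using nz[of 1] by simp
  show ?thesis
    unfolding hs_def sum3 fc_def
    using nz[of 3] nz[of 5] nz[of 7] nz[of 9] nz[of 2] nz[of 4] nz[of 6] nz[of 8] c0
    by (simp add: field_simps fact_numeral)
qed

lemma init4:
  fixes a b c p :: complex
  assumes hc: "\<forall>k::nat. c \<noteq> - of_nat k"
  shows "(hs a b c p 4 + hs a b c (-p) 4) / 2 = pochhammer a 2 * pochhammer b 2 * p^2 / (4 * pochhammer c 2) + pochhammer a 4 * pochhammer b 4 / (24 * pochhammer c 4) + p^4 / 24"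
proof -
  have nz: "\<And>k. pochhammer c k \<noteq> 0" using poch_nz[OF hc] .
  have c0: "c \<noteq> 0" using nz[of 1] by simp
  show ?thesis
    unfolding hs_def sum4 fc_def
    using nz[of 3] nz[of 5] nz[of 7] nz[of 9] nz[of 2] nz[of 4] nz[of 6] nz[of 8] c0
    by (simp add: field_simps fact_numeral)
qed

lemma init5:
  fixes a b c p :: complex
  assumes hc: "\<forall>k::nat. c \<noteq> - of_nat k"
  shows "(hs a b c p 5 + hs a b c (-p) 5) / 2 = a * b * p^4 / (24 * c) + pochhammer a 3 * pochhammer b 3 * p^2 / (12 * pochhammer c 3) + pochhammer a 5 * pochhammer b 5 / (120 * pochhammer c 5)"
proof -
  have nz: "\<And>k. pochhammer c k \<noteq> 0" using poch_nz[OF hc] .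
  have c0: "c \<noteq> 0" using nz[of 1] by simp
  show ?thesis
    unfolding hs_def sum5 fc_def
    using nz[of 3] nz[of 5] nz[of 7] nz[of 9] nz[of 2] nz[of 4] nz[of 6] nz[of 8] c0
    by (simp add: field_simps fact_numeral)
qed

lemma init6:
  fixes a b c p :: complex
  assumes hc: "\<forall>k::nat. c \<noteq> - of_nat k"
  shows "(hs a b c p 6 + hs a b c (-p) 6) / 2 = pochhammer a 2 * pochhammer b 2 * p^4 / (48 * pochhammer c 2) + pochhammer a 4 * pochhammer b 4 * p^2 / (48 * pochhammer c 4) + pochhammer a 6 * pochhammer b 6 / (720 * pochhammer c 6) + p^6 / 720"
proof -
  have nz: "\<And>k. pochhammer c k \<noteq> 0" using poch_nz[OF hc] .
  have c0: "c \<noteq> 0" using nz[of 1] by simp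
  show ?thesis
    unfolding hs_def sum6 fc_def
    using nz[of 3] nz[of 5] nz[of 7] nz[of 9] nz[of 2] nz[of 4] nz[of 6] nz[of 8] c0
    by (simp add: field_simps fact_numeral)
qed

lemma init7:
  fixes a b c p :: complex
  assumes hc: "\<forall>k::nat. c \<noteq> - of_nat k"
  shows "(hs a b c p 7 + hs a b c (-p) 7) / 2 = a * b * p^6 / (720 * c) + pochhammer a 3 * pochhammer b 3 * p^4 / (144 * pochhammer c 3) + pochhammer a 5 * pochhammer b 5 * p^2 / (240 * pochhammer c 5) + pochhammer a 7 * pochhammer b 7 / (5040 * pochhammer c 7)"
proof -
  have nz: "\<And>k. pochhammer c k \<noteq> 0" using poch_nz[OF hc] .
  have c0: "c \<noteq> 0" using nz[of 1] by simp
  show ?thesis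
    unfolding hs_def sum7 fc_def
    using nz[of 3] nz[of 5] nz[of 7] nz[of 9] nz[of 2] nz[of 4] nz[of 6] nz[of 8] c0
    by (simp add: field_simps fact_numeral)
qed

lemma init8:
  fixes a b c p :: complex
  assumes hc: "\<forall>k::nat. c \<noteq> - of_nat k"
  shows "(hs a b c p 8 + hs a b c (-p) 8) / 2 = pochhammer a 2 * pochhammer b 2 * p^6 / (1440 * pochhammer c 2) + pochhammer a 4 * pochhammer b 4 * p^4 / (576 * pochhammer c 4) + pochhammer a 6 * pochhammer b 6 * p^2 / (1440 * pochhammer c 6) + pochhammer a 8 * pochhammer b 8 / (40320 * pochhammer c 8) + p^8 / 40320"
proof -
  have nz: "\<And>k. pochhammer c k \<noteq> 0" using poch_nz[OF hc] .
  have c0: "c \<noteq> 0" using nz[of 1] by simp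
  show ?thesis
    unfolding hs_def sum8 fc_def
    using nz[of 3] nz[of 5] nz[of 7] nz[of 9] nz[of 2] nz[of 4] nz[of 6] nz[of 8] c0
    by (simp add: field_simps fact_numeral)
qed

lemma init9:
  fixes a b c p :: complex
  assumes hc: "\<forall>k::nat. c \<noteq> - of_nat k"
  shows "(hs a b c p 9 + hs a b c (-p) 9) / 2 = a * b * p^8 / (40320 * c) + pochhammer a 3 * pochhammer b 3 * p^6 / (4320 * pochhammer c 3) + pochhammer a 5 * pochhammer b 5 * p^4 / (2880 * pochhammer c 5) + pochhammer a 7 * pochhammer b 7 * p^2 / (10080 * pochhammer c 7) + pochhammer a 9 * pochhammer b 9 / (362880 * pochhammer c 9)"
proof -
  have nz: "\<And>k. pochhammer c k \<noteq> 0" using poch_nz[OF hc] .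
  have c0: "c \<noteq> 0" using nz[of 1] by simp
  show ?thesis
    unfolding hs_def sum9 fc_def
    using nz[of 3] nz[of 5] nz[of 7] nz[of 9] nz[of 2] nz[of 4] nz[of 6] nz[of 8] c0
    by (simp add: field_simps fact_numeral)
qed

theorem theorem3p11:
  fixes a b c p :: complex and u :: "nat \<Rightarrow> complex"
  assumes hc: "\<forall>k::nat. c \<noteq> - of_nat k"
    and hc2: "c \<noteq> 2"
    and hu: "\<forall>z::complex. norm z < 1 \<longrightarrow> (\<lambda>n. u n * z ^ n) sums (cosh (p * z) * hypergeomF a b c z)"
  shows "(u 0 = 1)
    \<and> (u 1 = a * b / c)
    \<and> (u 2 = pochhammer a 2 * pochhammer b 2 / (2 * pochhammer c 2) + p^2 / 2)
    \<and> (u 3 = a * b * p^2 / (2 * c) + pochhammer a 3 * pochhammer b 3 / (6 * pochhammer c 3))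
    \<and> (u 4 = pochhammer a 2 * pochhammer b 2 * p^2 / (4 * pochhammer c 2)
             + pochhammer a 4 * pochhammer b 4 / (24 * pochhammer c 4) + p^4 / 24)
    \<and> (u 5 = a * b * p^4 / (24 * c)
             + pochhammer a 3 * pochhammer b 3 * p^2 / (12 * pochhammer c 3)
             + pochhammer a 5 * pochhammer b 5 / (120 * pochhammer c 5))
    \<and> (u 6 = pochhammer a 2 * pochhammer b 2 * p^4 / (48 * pochhammer c 2)
             + pochhammer a 4 * pochhammer b 4 * p^2 / (48 * pochhammer c 4)
             + pochhammer a 6 * pochhammer b 6 / (720 * pochhammer c 6) + p^6 / 720)
    \<and> (u 7 = a * b * p^6 / (720 * c)
             + pochhammer a 3 * pochhammer b 3 * p^4 / (144 * pochhammer c 3)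
             + pochhammer a 5 * pochhammer b 5 * p^2 / (240 * pochhammer c 5)
             + pochhammer a 7 * pochhammer b 7 / (5040 * pochhammer c 7))
    \<and> (u 8 = pochhammer a 2 * pochhammer b 2 * p^6 / (1440 * pochhammer c 2)
             + pochhammer a 4 * pochhammer b 4 * p^4 / (576 * pochhammer c 4)
             + pochhammer a 6 * pochhammer b 6 * p^2 / (1440 * pochhammer c 6)
             + pochhammer a 8 * pochhammer b 8 / (40320 * pochhammer c 8) + p^8 / 40320)
    \<and> (u 9 = a * b * p^8 / (40320 * c)
             + pochhammer a 3 * pochhammer b 3 * p^6 / (4320 * pochhammer c 3)
             + pochhammer a 5 * pochhammer b 5 * p^4 / (2880 * pochhammer c 5)
             + pochhammer a 7 * pochhammer b 7 * p^2 / (10080 * pochhammer c 7)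
             + pochhammer a 9 * pochhammer b 9 / (362880 * pochhammer c 9))
    \<and> (\<forall>n::nat. n \<ge> 9 \<longrightarrow>
           u (n + 1) = (\<Sum>i\<le>9. delta i a b c p (of_nat n) * u (n - i)))"
proof -
  have ue: "\<And>n. u n = (hs a b c p n + hs a b c (-p) n) / 2"
    by (rule u_eq[OF hc hu])
  have rec: "u (n + 1) = (\<Sum>i\<le>9. delta i a b c p (of_nat n) * u (n - i))" if n: "n \<ge> 9" for n
  proof -
    have r1: "hs a b c p (n+1) = (\<Sum>i\<le>9. delta i a b c p (of_nat n) * hs a b c p (n - i))"
      by (rule rec10[OF hc hc2 hs_rec[OF hc] n])
    have r2: "hs a b c (-p) (n+1) = (\<Sum>i\<le>9. delta i a b c (-p) (of_nat n) * hs a b c (-p) (n - i))"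
      by (rule rec10[OF hc hc2 hs_rec[OF hc] n])
    have "u (n+1) = ((\<Sum>i\<le>9. delta i a b c p (of_nat n) * hs a b c p (n - i))
                   + (\<Sum>i\<le>9. delta i a b c p (of_nat n) * hs a b c (-p) (n - i))) / 2"
      unfolding ue r1 r2 delta_neg ..
    also have "\<dots> = (\<Sum>i\<le>9. delta i a b c p (of_nat n) * u (n - i))"
      unfolding ue sum.distrib[symmetric] sum_divide_distrib
      by (intro sum.cong refl) (simp add: ring_distribs add_divide_distrib)
    finally show ?thesis .
  qed
  show ?thesis
  proof (intro conjI allI impI)
    show "u 0 = 1" unfolding ue[of 0] by (rule init0[OF hc])
    show "u 1 = a * b / c" unfolding ue[of 1] by (rule init1[OF hc])
    show "u 2 = pochhammer a 2 * pochhammer b 2 / (2 * pochhammer c 2) + p^2 / 2" unfolding ue[of 2] by (rule init2[OF hc])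
    show "u 3 = a * b * p^2 / (2 * c) + pochhammer a 3 * pochhammer b 3 / (6 * pochhammer c 3)" unfolding ue[of 3] by (rule init3[OF hc])
    show "u 4 = pochhammer a 2 * pochhammer b 2 * p^2 / (4 * pochhammer c 2) + pochhammer a 4 * pochhammer b 4 / (24 * pochhammer c 4) + p^4 / 24" unfolding ue[of 4] by (rule init4[OF hc])
    show "u 5 = a * b * p^4 / (24 * c) + pochhammer a 3 * pochhammer b 3 * p^2 / (12 * pochhammer c 3) + pochhammer a 5 * pochhammer b 5 / (120 * pochhammer c 5)" unfolding ue[of 5] by (rule init5[OF hc])
    show "u 6 = pochhammer a 2 * pochhammer b 2 * p^4 / (48 * pochhammer c 2) + pochhammer a 4 * pochhammer b 4 * p^2 / (48 * pochhammer c 4) + pochhammer a 6 * pochhammer b 6 / (720 * pochhammer c 6) + p^6 / 720" unfolding ue[of 6] by (rule init6[OF hc])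
    show "u 7 = a * b * p^6 / (720 * c) + pochhammer a 3 * pochhammer b 3 * p^4 / (144 * pochhammer c 3) + pochhammer a 5 * pochhammer b 5 * p^2 / (240 * pochhammer c 5) + pochhammer a 7 * pochhammer b 7 / (5040 * pochhammer c 7)" unfolding ue[of 7] by (rule init7[OF hc])
    show "u 8 = pochhammer a 2 * pochhammer b 2 * p^6 / (1440 * pochhammer c 2) + pochhammer a 4 * pochhammer b 4 * p^4 / (576 * pochhammer c 4) + pochhammer a 6 * pochhammer b 6 * p^2 / (1440 * pochhammer c 6) + pochhammer a 8 * pochhammer b 8 / (40320 * pochhammer c 8) + p^8 / 40320" unfolding ue[of 8] by (rule init8[OF hc])
    show "u 9 = a * b * p^8 / (40320 * c) + pochhammer a 3 * pochhammer b 3 * p^6 / (4320 * pochhammer c 3) + pochhammer a 5 * pochhammer b 5 * p^4 / (2880 * pochhammer c 5) + pochhammer a 7 * pochhammer b 7 * p^2 / (10080 * pochhammer c 7) + pochhammer a 9 * pochhammer b 9 / (362880 * pochhammer c 9)" unfolding ue[of 9] by (rule init9[OF hc])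
  next
    fix n :: nat assume "9 \<le> n"
    then show "u (n + 1) = (\<Sum>i\<le>9. delta i a b c p (of_nat n) * u (n - i))" by (rule rec)
  qed
qed


end
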